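(* Let $n\ge2$ be an integer, $x_0,t_0\in\mathbb{R}$, $\beta>0$, $\psi(t,x)=(x-x_0)^2-\beta(t-t_0)^2$, $\ell=\lambda\psi$ with $\lambda\ge 1$, and let $w\in C^\infty(\mathbb{R}^2;\mathbb{R})$. With $I_1(w),I_2(w)$ as defined in the context, one has the pointwise identity $$I_1(w)I_2(w)=\partial_x G+\sum_{m=0}^{n-1}\Big[\frac{n^2}{2}\binom{n-1}{m}\ell_x^{\,2n-2m-2}\ell_{xx}+R_m\Big]|\partial_x^m w|^2,$$ where $G$ is a finite sum of terms of the form $c\,\ell_x^{\,a}\ell_{xx}^{\,b}\,\partial_x^{i}w\,\partial_x^{j}w$ ($c\in\mathbb{R}$, $a,b,i,j\in\mathbb{Z}_{\ge0}$), and each $R_m$ is a polynomial in $\ell_x,\ell_{xx}$ (independent of $w$) such that on every bounded set of $(t,x)$ one has $|R_m|\le C\lambda^{2n-2m-3}$ for a constant $C$ independent of $\lambda\ge1$.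
   Context: $\binom{j}{k}$ denotes the binomial coefficient (zero unless $0\le k\le j$). For a smooth $w$ define $$I_1(w)=\sum_{\substack{j\in[0,n]\\ j\ \text{odd}}}\binom{n}{j}(-1)^{n-j}\ell_x^{\,n-j}\partial_x^j w-\binom{n}{2}\ell_{xx}\sum_{\substack{k\in[0,n-2]\\ k\ \text{even}}}\binom{n-2}{k}(-1)^{n-2-k}\ell_x^{\,n-2-k}\partial_x^k w,$$ $$I_2(w)=\sum_{\substack{k\in[0,n]\\ k\ \text{even}}}\binom{n}{k}(-1)^{n-k}\ell_x^{\,n-k}\partial_x^k w-\binom{n}{2}\ell_{xx}\sum_{\substack{j\in[0,n-2]\\ j\ \text{odd}}}\binom{n-2}{j}(-1)^{n-2-j}\ell_x^{\,n-2-j}\partial_x^j w.$$ (These are the parts of $e^{\ell}\partial_x^n(e^{-\ell}w)$ consisting of the highest-$\lambda$-order terms with odd (resp. even) $x$-derivatives of $w$ plus the next-highest-order terms with even (resp. odd) derivatives.) *)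

theory Defs
  imports "HOL-Analysis.Analysis"
begin

definition partial_x :: "(real \<times> real \<Rightarrow> real) \<Rightarrow> real \<times> real \<Rightarrow> real" where
  "partial_x f = (\<lambda>(t, x). deriv (\<lambda>y. f (t, y)) x)"

definition partial_t :: "(real \<times> real \<Rightarrow> real) \<Rightarrow> real \<times> real \<Rightarrow> real" where
  "partial_t f = (\<lambda>(t, x). deriv (\<lambda>s. f (s, x)) t)"

fun pd :: "bool list \<Rightarrow> (real \<times> real \<Rightarrow> real) \<Rightarrow> real \<times> real \<Rightarrow> real" where
  "pd [] f = f"
| "pd (d # ds) f = (if d then partial_x else partial_t) (pd ds f)"

definition smooth2 :: "(real \<times> real \<Rightarrow> real) \<Rightarrow> bool" where
  "smooth2 f \<longleftrightarrow> (\<forall>ds. pd ds f differentiable_on UNIV \<and> continuous_on UNIV (pd ds f))"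

definition dx :: "nat \<Rightarrow> (real \<times> real \<Rightarrow> real) \<Rightarrow> real \<times> real \<Rightarrow> real" where
  "dx j f = (partial_x ^^ j) f"

definition psi :: "real \<Rightarrow> real \<Rightarrow> real \<Rightarrow> real \<times> real \<Rightarrow> real" where
  "psi x0 t0 \<beta> = (\<lambda>(t, x). (x - x0)^2 - \<beta> * (t - t0)^2)"

definition ell :: "real \<Rightarrow> real \<Rightarrow> real \<Rightarrow> real \<Rightarrow> real \<times> real \<Rightarrow> real" where
  "ell lam x0 t0 \<beta> = (\<lambda>p. lam * psi x0 t0 \<beta> p)"

definition I1 :: "nat \<Rightarrow> (real \<times> real \<Rightarrow> real) \<Rightarrow> (real \<times> real \<Rightarrow> real) \<Rightarrow> real \<times> real \<Rightarrow> real" where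
  "I1 n l w p =
     (\<Sum>j\<in>{j. j \<le> n \<and> odd j}. of_nat (n choose j) * (-1)^(n - j) * (partial_x l p)^(n - j) * dx j w p)
     - of_nat (n choose 2) * partial_x (partial_x l) p *
       (\<Sum>k\<in>{k. k \<le> n - 2 \<and> even k}. of_nat ((n - 2) choose k) * (-1)^(n - 2 - k) * (partial_x l p)^(n - 2 - k) * dx k w p)"

definition I2 :: "nat \<Rightarrow> (real \<times> real \<Rightarrow> real) \<Rightarrow> (real \<times> real \<Rightarrow> real) \<Rightarrow> real \<times> real \<Rightarrow> real" where
  "I2 n l w p =
     (\<Sum>k\<in>{k. k \<le> n \<and> even k}. of_nat (n choose k) * (-1)^(n - k) * (partial_x l p)^(n - k) * dx k w p)
     - of_nat (n choose 2) * partial_x (partial_x l) p *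
       (\<Sum>j\<in>{j. j \<le> n - 2 \<and> odd j}. of_nat ((n - 2) choose j) * (-1)^(n - 2 - j) * (partial_x l p)^(n - 2 - j) * dx j w p)"

definition Gsum :: "nat \<Rightarrow> (nat \<Rightarrow> nat \<Rightarrow> nat \<Rightarrow> nat \<Rightarrow> real) \<Rightarrow> (real \<times> real \<Rightarrow> real) \<Rightarrow> (real \<times> real \<Rightarrow> real) \<Rightarrow> real \<times> real \<Rightarrow> real" where
  "Gsum D g l w p = (\<Sum>a\<le>D. \<Sum>b\<le>D. \<Sum>i\<le>D. \<Sum>j\<le>D.
      g a b i j * (partial_x l p)^a * (partial_x (partial_x l) p)^b * dx i w p * dx j w p)"

definition Rpoly :: "nat \<Rightarrow> (nat \<Rightarrow> nat \<Rightarrow> real) \<Rightarrow> (real \<times> real \<Rightarrow> real) \<Rightarrow> real \<times> real \<Rightarrow> real" where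
  "Rpoly D c l p = (\<Sum>a\<le>D. \<Sum>b\<le>D. c a b * (partial_x l p)^a * (partial_x (partial_x l) p)^b)"

end

theory Submission
  imports Defs "HOL-Computational_Algebra.Polynomial"
begin


type_synonym gm = "real \<times> nat \<times> nat \<times> nat \<times> nat"
type_synonym dm = "real \<times> nat \<times> nat \<times> nat"

fun gmono :: "real \<Rightarrow> real \<Rightarrow> (nat \<Rightarrow> real) \<Rightarrow> gm \<Rightarrow> real" where
  "gmono s c u (k,a,b,i,j) = k * s^a * c^b * u i * u j"
fun dmono :: "real \<Rightarrow> real \<Rightarrow> (nat \<Rightarrow> real) \<Rightarrow> gm \<Rightarrow> real" where
  "dmono s c u (k,a,b,i,j) = k * (of_nat a * s^(a-1) * c^(b+1) * u i * u j + s^a * c^b * (u (Suc i) * u j + u i * u (Suc j)))"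
fun dval :: "real \<Rightarrow> real \<Rightarrow> (nat \<Rightarrow> real) \<Rightarrow> dm \<Rightarrow> real" where
  "dval s c u (k,a,b,m) = k * s^a * c^b * (u m)^2"

fun red :: "real \<Rightarrow> nat \<Rightarrow> nat \<Rightarrow> nat \<Rightarrow> nat \<Rightarrow> gm list \<times> dm list" where
  "red k a b i 0 = ([], [(k,a,b,i)])"
| "red k a b i (Suc 0) = ([(k/2,a,b,i,i)], if a = 0 then [] else [(-k * of_nat a/2, a-1, b+1, i)])"
| "red k a b i (Suc (Suc d)) =
    ((k,a,b,i,i+Suc d) # (if a = 0 then [] else fst (red (-k * of_nat a) (a-1) (b+1) i (Suc d))) @ fst (red (-k) a b (Suc i) d),
     (if a = 0 then [] else snd (red (-k * of_nat a) (a-1) (b+1) i (Suc d))) @ snd (red (-k) a b (Suc i) d))"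

abbreviation SG where "SG s c u L \<equiv> sum_list (map (dmono s c u) L)"
abbreviation SD where "SD s c u L \<equiv> sum_list (map (dval s c u) L)"

lemma red_correct:
  "gmono s c u (k,a,b,i,i+d) = SG s c u (fst (red k a b i d)) + SD s c u (snd (red k a b i d))"
proof (induction k a b i d rule: red.induct)
  case (1 k a b i)
  then show ?case by (simp add: power2_eq_square)
next
  case (2 k a b i)
  then show ?case
  proof (cases a)
    case 0 then show ?thesis by (simp add: power2_eq_square algebra_simps)
  next
    case (Suc a') then show ?thesis by (simp add: power2_eq_square field_simps)
  qed
next
  case (3 k a b i d)
  show ?case
  proof (cases a)
    case 0 with 3 show ?thesis by (simp add: algebra_simps)
  next
    case (Suc a')
    with 3 show ?thesis by (simp add: algebra_simps)
  qed
qed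

definition ew :: "nat \<Rightarrow> nat \<Rightarrow> nat \<Rightarrow> nat \<Rightarrow> nat" where
  "ew a b i d = a + b + 2*i + d - d mod 2"

definition EWP :: "nat \<Rightarrow> dm list \<Rightarrow> bool" where
  "EWP e L \<longleftrightarrow> (\<forall>x\<in>set L. case x of (k',a',b',m) \<Rightarrow> \<exists>q. e = a' + b' + 2*m + 2*q)"

lemma EWP_append[simp]: "EWP e (L1 @ L2) \<longleftrightarrow> EWP e L1 \<and> EWP e L2"
  unfolding EWP_def set_append ball_Un by blast

lemma EWP_shift: "EWP e L \<Longrightarrow> EWP (e + 2*r) L"
  unfolding EWP_def
proof (intro ballI)
  fix x assume H: "\<forall>x\<in>set L. case x of (k',a',b',m) \<Rightarrow> \<exists>q. e = a' + b' + 2*m + 2*q" and x: "x \<in> set L"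
  obtain k' a' b' m where xx: "x = (k',a',b',m)" by (cases x) auto
  from H x xx obtain q where "e = a' + b' + 2*m + 2*q" by auto
  then have "e + 2*r = a' + b' + 2*m + 2*(q+r)" by simp
  then show "case x of (k',a',b',m) \<Rightarrow> \<exists>q. e + 2*r = a' + b' + 2*m + 2*q" using xx by blast
qed

lemma red_ew: "EWP (ew a b i d) (snd (red k a b i d))"
proof (induction k a b i d rule: red.induct)
  case (1 k a b i)
  then show ?case by (auto simp: ew_def EWP_def)
next
  case (2 k a b i)
  then show ?case by (auto simp: ew_def EWP_def)
next
  case (3 k a b i d)
  show ?case
  proof (cases "even d")
    case True
    then obtain q where q: "d = 2*q" by auto
    have e1: "ew a b i (Suc (Suc d)) = ew (a-1) (b+1) i (Suc d) + 2*1" if "a > 0"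
      using that q by (simp add: ew_def)
    have e2: "ew a b (Suc i) d = ew a b i (Suc (Suc d))" using q by (simp add: ew_def)
    have A: "EWP (ew a b i (Suc (Suc d))) (snd (red (-k * of_nat a) (a-1) (b+1) i (Suc d)))" if "a \<noteq> 0"
      using 3(1)[OF that] e1 that EWP_shift by (metis bot_nat_0.not_eq_extremum)
    show ?thesis using 3(2) A e2 by (auto simp: EWP_def[of _ "[]"])
  next
    case False
    then obtain q where q: "d = 2*q+1" using oddE by blast
    have e1: "ew (a-1) (b+1) i (Suc d) = ew a b i (Suc (Suc d))" if "a > 0"
      using that q by (simp add: ew_def)
    have e2: "ew a b (Suc i) d = ew a b i (Suc (Suc d))" using q by (simp add: ew_def)
    show ?thesis using 3 e1 e2 by (auto simp: EWP_def[of _ "[]"])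
  qed
qed

lemma red_bounds:
  "(\<forall>(k',a',b',i',j') \<in> set (fst (red k a b i d)). a' \<le> a \<and> b' \<le> a + b \<and> i' \<le> i + d \<and> j' \<le> i + d)
 \<and> (\<forall>(k',a',b',m) \<in> set (snd (red k a b i d)). a' \<le> a \<and> b' \<le> a + b \<and> m \<le> i + d)"
proof (induction k a b i d rule: red.induct)
  case (3 k a b i d)
  then show ?case by (fastforce split: if_splits)
qed auto

lemma red_zero:
  "\<forall>e \<in> set (snd (red 0 a b i d)). fst e = 0"
proof (induction "0::real" a b i d rule: red.induct)
  case (3 a b i d)
  then show ?case by auto
qed auto

fun tv :: "real \<Rightarrow> real \<Rightarrow> nat \<Rightarrow> nat \<Rightarrow> dm \<Rightarrow> real" where
  "tv s c E m (k',a',b',m') = (if a' + b' + 2*m' = E \<and> m' = m then k' * s^a' * c^b' else 0)"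

definition Lval :: "real \<Rightarrow> real \<Rightarrow> real \<Rightarrow> nat \<Rightarrow> nat \<Rightarrow> nat \<Rightarrow> nat \<Rightarrow> nat \<Rightarrow> real" where
  "Lval s c k a b i d m =
    (if m = i + d div 2 then
       (if even d then k * (-1)^(d div 2) * s^a * c^b
        else - k * (-1)^(d div 2) * (of_nat d / 2) * of_nat a * s^(a-1) * c^(b+1))
     else 0)"

lemma red_top:
  "ew a b i d \<le> E \<Longrightarrow>
   sum_list (map (tv s c E m) (snd (red k a b i d))) = (if E = ew a b i d then Lval s c k a b i d m else 0)"
proof (induction k a b i d rule: red.induct)
  case (1 k a b i)
  then show ?case by (auto simp: ew_def Lval_def)
next
  case (2 k a b i)
  then show ?case by (auto simp: ew_def Lval_def)
next
  case (3 k a b i d)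
  show ?case
  proof (cases "even d")
    case True
    then obtain q where q: "d = 2*q" by auto
    have e2: "ew a b (Suc i) d = ew a b i (Suc (Suc d))" using q by (simp add: ew_def)
    have A: "sum_list (map (tv s c E m) (snd (red (-k * of_nat a) (a-1) (b+1) i (Suc d)))) = 0" if "a \<noteq> 0"
    proof -
      have "ew (a-1) (b+1) i (Suc d) + 2 = ew a b i (Suc (Suc d))" using that q by (simp add: ew_def)
      then show ?thesis using 3(1)[OF that] "3.prems" by auto
    qed
    have B: "sum_list (map (tv s c E m) (snd (red (-k) a b (Suc i) d))) =
       (if E = ew a b i (Suc (Suc d)) then Lval s c (-k) a b (Suc i) d m else 0)"
      using 3(2) "3.prems" e2 by simp
    have C: "Lval s c (-k) a b (Suc i) d m = Lval s c k a b i (Suc (Suc d)) m"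
      using q by (simp add: Lval_def)
    show ?thesis using A B C by (cases "a = 0") auto
  next
    case False
    then obtain q where q: "d = 2*q+1" using oddE by blast
    have e2: "ew a b (Suc i) d = ew a b i (Suc (Suc d))" using q by (simp add: ew_def)
    have B: "sum_list (map (tv s c E m) (snd (red (-k) a b (Suc i) d))) =
       (if E = ew a b i (Suc (Suc d)) then Lval s c (-k) a b (Suc i) d m else 0)"
      using 3(2) "3.prems" e2 by simp
    show ?thesis
    proof (cases "a = 0")
      case True
      then show ?thesis using B by (simp add: Lval_def)
    next
      case False
      have e1: "ew (a-1) (b+1) i (Suc d) = ew a b i (Suc (Suc d))" using False q by (simp add: ew_def)
      have A: "sum_list (map (tv s c E m) (snd (red (-k * of_nat a) (a-1) (b+1) i (Suc d)))) =
        (if E = ew a b i (Suc (Suc d)) then Lval s c (-k * of_nat a) (a-1) (b+1) i (Suc d) m else 0)"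
        using 3(1)[OF False] "3.prems" e1 by simp
      have C: "Lval s c (-k * of_nat a) (a-1) (b+1) i (Suc d) m + Lval s c (-k) a b (Suc i) d m
          = Lval s c k a b i (Suc (Suc d)) m"
        using q False by (simp add: Lval_def field_simps)
      show ?thesis using A B C False by auto
    qed
  qed
qed




lemma dx_Suc: "dx (Suc j) f = partial_x (dx j f)"
  by (simp add: dx_def)

lemma dx_pd: "dx j f = pd (replicate j True) f"
  by (induction j) (auto simp: dx_def)

lemma dx_deriv:
  assumes "smooth2 w"
  shows "((\<lambda>y. dx j w (t,y)) has_real_derivative dx (Suc j) w (t,y)) (at y)"
proof -
  have "pd (replicate j True) w differentiable_on UNIV" using assms by (simp add: smooth2_def)
  then have d1: "dx j w differentiable at (t,y)"
    by (simp add: dx_pd differentiable_on_eq_differentiable_at)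
  have d0: "(\<lambda>y::real. (t,y)) differentiable at y"
    by (intro derivative_intros)
  have "((dx j w) \<circ> (\<lambda>y. (t,y))) differentiable at y"
    by (rule differentiable_chain_at[OF d0]) (use d1 in simp)
  then have "(\<lambda>y. dx j w (t,y)) differentiable at y" by (simp add: o_def)
  then have "((\<lambda>y. dx j w (t,y)) has_real_derivative deriv (\<lambda>y. dx j w (t,y)) y) (at y)"
    using DERIV_deriv_iff_real_differentiable by blast
  then show ?thesis by (simp add: dx_Suc partial_x_def)
qed

lemma ell_x: "partial_x (ell lam x0 t0 \<beta>) (t,x) = 2 * lam * (x - x0)"
proof -
  have "((\<lambda>y. lam * ((y - x0)^2 - \<beta> * (t - t0)^2)) has_real_derivative 2 * lam * (x - x0)) (at x)"
    by (auto intro!: derivative_eq_intros simp: algebra_simps)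
  then show ?thesis
    by (simp add: partial_x_def ell_def psi_def DERIV_imp_deriv)
qed

lemma ell_xx: "partial_x (partial_x (ell lam x0 t0 \<beta>)) (t,x) = 2 * lam"
proof -
  have "((\<lambda>y. 2 * lam * (y - x0)) has_real_derivative 2 * lam) (at x)"
    by (auto intro!: derivative_eq_intros)
  moreover have "(\<lambda>y. partial_x (ell lam x0 t0 \<beta>) (t,y)) = (\<lambda>y. 2 * lam * (y - x0))"
    using ell_x by auto
  moreover have "partial_x (partial_x (ell lam x0 t0 \<beta>)) (t,x) = deriv (\<lambda>y. partial_x (ell lam x0 t0 \<beta>) (t,y)) x"
    unfolding partial_x_def[of "partial_x (ell lam x0 t0 \<beta>)"] by simp
  ultimately show ?thesis
    by (simp add: DERIV_imp_deriv)
qed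




lemma cL: "coeff ([:1,b:]^r) i = of_nat (r choose i) * (b::real)^i"
proof (cases "i \<le> r")
  case True then show ?thesis by (simp add: coeff_linear_poly_power)
next
  case False
  have "degree ([:1,b:]^r) \<le> r"
    by (rule order.trans[OF degree_power_le]) (auto)
  then show ?thesis using False by (simp add: coeff_eq_0)
qed

lemma cX: "coeff ([:0,1:] * (p::real poly)) i = (if i = 0 then 0 else coeff p (i-1))"
  by (auto simp: coeff_pCons')

lemma cQ1: "coeff ([:1,0,c:] * p) i = coeff p i + (if i \<ge> 2 then c * coeff p (i-2) else (0::real))"
  by (cases i; cases "i-1") (auto simp: coeff_pCons')

lemma cQm: "coeff ([:1,0,-1:] * p) i = coeff p i - (if i \<ge> 2 then coeff p (i-2) else (0::real))"
  by (cases i; cases "i-1") (auto simp: coeff_pCons')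

lemma cQ: "coeff ([:1,0,-1:]^r) i = (if even i then (-1)^(i div 2) * of_nat (r choose (i div 2)) else (0::real))"
proof (induction r arbitrary: i)
  case 0
  then show ?case by (cases i) (auto simp: coeff_pCons')
next
  case (Suc r)
  have e: "coeff ([:1,0,-1:]^Suc r) i = coeff ([:1,0,-1:]^r) i - (if i \<ge> 2 then coeff ([:1,0,-1:]^r) (i-2) else (0::real))"
    unfolding power_Suc by (rule cQm)
  show ?case
  proof (cases "i \<ge> 2")
    case True
    then obtain i' where i': "i = Suc (Suc i')" by (metis add_2_eq_Suc le_Suc_ex)
    show ?thesis
    proof (cases "even i'")
      case True
      then obtain q where q: "i' = 2*q" by auto
      have "i div 2 = Suc q" "(i-2) div 2 = q" using i' q by auto
      then show ?thesis using e Suc i' q by (simp add: algebra_simps)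
    next
      case False
      then show ?thesis using e Suc i' by simp
    qed
  next
    case False
    then have "i = 0 \<or> i = 1" by auto
    then show ?thesis using e Suc by auto
  qed
qed

lemma CS:
  fixes f g :: "nat \<Rightarrow> real"
  assumes "\<forall>j>n. f j = 0" "\<forall>k>n. g k = 0"
  shows "(\<Sum>j<n+1. \<Sum>k<n+1. if j + k = N then f j * g k else 0) = (\<Sum>i\<le>N. f i * g (N - i))"
proof -
  have inner: "(\<Sum>k<n+1. if j + k = N then f j * g k else 0) = (if j \<le> N then f j * g (N - j) else 0)" for j
  proof (cases "j \<le> N")
    case True
    have "(\<Sum>k<n+1. if j + k = N then f j * g k else 0) = (\<Sum>k<n+1. if k = N - j then f j * g k else 0)"
      using True by (intro sum.cong) auto
    also have "\<dots> = (if N - j < n + 1 then f j * g (N - j) else 0)" by (simp add: sum.delta')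
    also have "\<dots> = f j * g (N - j)" using assms(2) by auto
    finally show ?thesis using True by simp
  qed auto
  have "(\<Sum>j<n+1. \<Sum>k<n+1. if j + k = N then f j * g k else 0) = (\<Sum>j<n+1. if j \<le> N then f j * g (N - j) else 0)"
    using inner by simp
  also have "\<dots> = (\<Sum>j\<in>{..<n+1} \<union> {..N}. if j \<le> N then f j * g (N - j) else 0)"
    by (rule sum.mono_neutral_left) (use assms(1) in auto)
  also have "\<dots> = (\<Sum>j\<le>N. if j \<le> N then f j * g (N - j) else 0)"
    by (rule sum.mono_neutral_right) (use assms(1) in auto)
  also have "\<dots> = (\<Sum>i\<le>N. f i * g (N - i))" by simp
  finally show ?thesis .
qed

lemma cScal: "coeff ([:c:] * p) i = c * coeff p i"
  by simp

lemma polyid1: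
  fixes a b :: "real poly"
  shows "([:c:] * ([:0,1:] * (a + b))) * ([:1,1:]*a + [:1,-1:]*b) - ([:1,1:]*a - [:1,-1:]*b) * ([:c:] * ([:0,1:] * (a - b)))
     = [:c:] * [:0,1:] * (a*b) * 2 * ([:1,1:] + [:1,-1:])"
  by algebra

lemma polyid2:
  fixes a b :: "real poly"
  shows "(a + b) * ([:1,1:]*[:1,1:]*a + [:1,-1:]*[:1,-1:]*b) - ([:1,1:]*[:1,1:]*a - [:1,-1:]*[:1,-1:]*b) * (a - b)
     = (a*b) * 2 * ([:1,1:]*[:1,1:] + [:1,-1:]*[:1,-1:])"
  by algebra

lemma PM: "[:1,1:] * [:1,-1:] = ([:1,0,-1:] :: real poly)"
  by simp

lemma PpM: "[:1,1:] + [:1,-1:] = ([:2:] :: real poly)"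
  by simp

lemma PPMM: "[:1,1:]*[:1,1:] + [:1,-1:]*[:1,-1:] = ([:2,0,2:] :: real poly)"
  by simp

lemma jchoose: "of_nat j * of_nat (Suc r choose j) = (of_nat (Suc r) * (if j = 0 then 0 else of_nat (r choose (j-1))) :: real)"
proof (cases j)
  case (Suc j')
  have "Suc j' * (Suc r choose Suc j') = Suc r * (r choose j')"
    using Suc_times_binomial_eq[of r j'] by (simp add: mult.commute)
  then have "real (Suc j') * real (Suc r choose Suc j') = real (Suc r) * real (r choose j')"
    by (metis of_nat_mult)
  then show ?thesis using Suc by simp
qed simp

lemma comb1:
  assumes "n \<ge> 1"
  shows "(\<Sum>j<n+1. \<Sum>k<n+1. if odd j \<and> even k \<and> j + k = 2*m+1
            then of_nat (n choose j) * of_nat (n choose k) * (-1)^(k+m) * (of_nat j - of_nat k) else 0)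
         = of_nat n * (of_nat ((n-1) choose m) :: real)"
proof -
  obtain r where n: "n = Suc r" using assms by (cases n) auto
  define N where "N = 2*m+1"
  define a :: "real poly" where "a = [:1,1:]^r"
  define b :: "real poly" where "b = [:1,-1:]^r"
  define A1 where "A1 = [:of_nat n:] * ([:0,1:] * (a + b))"
  define B1 where "B1 = [:1,1:]*a + [:1,-1:]*b"
  define A2 where "A2 = [:1,1:]*a - [:1,-1:]*b"
  define B2 where "B2 = [:of_nat n:] * ([:0,1:] * (a - b))"
  define f1 where "f1 j = (if odd j then of_nat j * of_nat (n choose j) else (0::real))" for j
  define g1 where "g1 k = (if even k then of_nat (n choose k) else (0::real))" for k
  define f2 where "f2 j = (if odd j then of_nat (n choose j) else (0::real))" for j
  define g2 where "g2 k = (if even k then of_nat k * of_nat (n choose k) else (0::real))" for k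
  have ca: "coeff a i = of_nat (r choose i)" for i unfolding a_def using cL[of 1 r i] by simp
  have cb: "coeff b i = (-1)^i * of_nat (r choose i)" for i unfolding b_def using cL[of "-1" r i] by simp
  have can: "coeff ([:1,1:]*a) i = of_nat (n choose i)" for i
    unfolding a_def n using cL[of 1 "Suc r" i] by simp
  have cbn: "coeff ([:1,-1:]*b) i = (-1)^i * of_nat (n choose i)" for i
    unfolding b_def n using cL[of "-1" "Suc r" i] by simp
  have hA1: "coeff A1 i = 2 * f1 i" for i
  proof (cases i)
    case 0 then show ?thesis by (simp add: A1_def f1_def)
  next
    case (Suc i')
    have "of_nat i * of_nat (n choose i) = (of_nat n * of_nat (r choose i') :: real)"
      using jchoose[of i r] Suc n by simp
    then show ?thesis using Suc by (auto simp: A1_def f1_def cX ca cb)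
  qed
  have hA2: "coeff A2 i = 2 * f2 i" for i unfolding A2_def coeff_diff can cbn by (auto simp: f2_def)
  have hB1: "coeff B1 i = 2 * g1 i" for i unfolding B1_def coeff_add can cbn by (auto simp: g1_def)
  have hB2: "coeff B2 i = 2 * g2 i" for i
  proof (cases i)
    case 0 then show ?thesis by (simp add: B2_def g2_def)
  next
    case (Suc i')
    have "of_nat i * of_nat (n choose i) = (of_nat n * of_nat (r choose i') :: real)"
      using jchoose[of i r] Suc n by simp
    then show ?thesis using Suc by (auto simp: B2_def g2_def cX ca cb)
  qed
  have trm: "(if odd j \<and> even k \<and> j + k = N
            then of_nat (n choose j) * of_nat (n choose k) * (-1)^(k+m) * (of_nat j - of_nat k) else 0)
     = (-1)^m * (if j + k = N then f1 j * g1 k - f2 j * g2 k else 0)" for j k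
  proof (cases "j + k = N")
    case True
    then have "odd (j+k)" unfolding N_def by simp
    then show ?thesis using True by (auto simp: f1_def g1_def f2_def g2_def power_add algebra_simps)
  qed simp
  have z: "\<forall>j>n. f j = 0" if "\<And>j. j > n \<Longrightarrow> f j = 0" for f :: "nat \<Rightarrow> real" using that by auto
  have LHS: "(\<Sum>j<n+1. \<Sum>k<n+1. if odd j \<and> even k \<and> j + k = N
            then of_nat (n choose j) * of_nat (n choose k) * (-1)^(k+m) * (of_nat j - of_nat k) else 0)
     = (-1)^m * ((\<Sum>j<n+1. \<Sum>k<n+1. if j + k = N then f1 j * g1 k else 0)
                - (\<Sum>j<n+1. \<Sum>k<n+1. if j + k = N then f2 j * g2 k else 0))"
  proof -
    have ifd: "(if P then x - y else 0) = (if P then x else 0) - (if P then y else (0::real))" for P x y by simp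
    show ?thesis
      by (simp only: trm ifd sum_distrib_left[symmetric] sum_subtractf)
  qed
  have S1: "(\<Sum>j<n+1. \<Sum>k<n+1. if j + k = N then f1 j * g1 k else 0) = coeff (A1 * B1) N / 4"
    by (subst CS) (auto simp: f1_def g1_def coeff_mult hA1 hB1 sum_divide_distrib)
  have S2: "(\<Sum>j<n+1. \<Sum>k<n+1. if j + k = N then f2 j * g2 k else 0) = coeff (A2 * B2) N / 4"
    by (subst CS) (auto simp: f2_def g2_def coeff_mult hA2 hB2 sum_divide_distrib)
  have P: "A1 * B1 - A2 * B2 = [:0,1:] * smult (4 * of_nat n) ([:1,0,-1:]^r)"
  proof -
    have "A1 * B1 - A2 * B2 = [:of_nat n:] * [:0,1:] * (a*b) * 2 * ([:1,1:] + [:1,-1:])"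
      unfolding A1_def B1_def A2_def B2_def by (rule polyid1)
    also have "a * b = [:1,0,-1:]^r" unfolding a_def b_def by (simp add: power_mult_distrib[symmetric])
    finally have "A1 * B1 - A2 * B2 = [:of_nat n:] * [:0,1:] * [:1,0,-1:]^r * 2 * [:2:]" by (simp only: PpM)
    then show ?thesis by (simp add: algebra_simps numeral_poly)
  qed
  have cP: "coeff (A1 * B1 - A2 * B2) N = 4 * of_nat n * (-1)^m * of_nat (r choose m)"
    unfolding P N_def by (simp add: cX cQ)
  have "(\<Sum>j<n+1. \<Sum>k<n+1. if odd j \<and> even k \<and> j + k = N
            then of_nat (n choose j) * of_nat (n choose k) * (-1)^(k+m) * (of_nat j - of_nat k) else 0)
      = (-1)^m * (coeff (A1 * B1 - A2 * B2) N / 4)"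
    using LHS S1 S2 by (simp add: diff_divide_distrib)
  also have "\<dots> = of_nat n * of_nat (r choose m)" unfolding cP
    by (simp add: power_add[symmetric] power_mult_distrib[symmetric] mult.assoc[symmetric])
  finally show ?thesis unfolding N_def n by simp
qed

lemma comb2:
  assumes "n \<ge> 2"
  shows "(\<Sum>j<n+1. \<Sum>k<n+1.
      (if odd j \<and> odd k \<and> k \<le> n-2 \<and> j + k = 2*m then of_nat (n choose j) * of_nat ((n-2) choose k) * (-1)^(m+k) else 0)
    + (if even j \<and> j \<le> n-2 \<and> even k \<and> j + k = 2*m then of_nat ((n-2) choose j) * of_nat (n choose k) * (-1)^(m+k) else 0))
    = of_nat ((n-2) choose m) - (if m = 0 then 0 else (of_nat ((n-2) choose (m-1)) :: real))"
proof -
  obtain r where n: "n = Suc (Suc r)" using assms by (metis add_2_eq_Suc le_Suc_ex)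
  have r: "n - 2 = r" using n by simp
  define N where "N = 2*m"
  define a :: "real poly" where "a = [:1,1:]^r"
  define b :: "real poly" where "b = [:1,-1:]^r"
  define A3 where "A3 = a + b"
  define B3 where "B3 = [:1,1:]*[:1,1:]*a + [:1,-1:]*[:1,-1:]*b"
  define A4 where "A4 = [:1,1:]*[:1,1:]*a - [:1,-1:]*[:1,-1:]*b"
  define B4 where "B4 = a - b"
  define f3 where "f3 j = (if even j then of_nat (r choose j) else (0::real))" for j
  define g3 where "g3 k = (if even k then of_nat (n choose k) else (0::real))" for k
  define f4 where "f4 j = (if odd j then of_nat (n choose j) else (0::real))" for j
  define g4 where "g4 k = (if odd k then of_nat (r choose k) else (0::real))" for k
  have ca: "coeff a i = of_nat (r choose i)" for i unfolding a_def using cL[of 1 r i] by simp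
  have cb: "coeff b i = (-1)^i * of_nat (r choose i)" for i unfolding b_def using cL[of "-1" r i] by simp
  have ea: "[:1,1:]*[:1,1:]*a = [:1,1:]^n" unfolding a_def n by (simp only: power_Suc mult.assoc)
  have eb: "[:1,-1:]*[:1,-1:]*b = [:1,-1:]^n" unfolding b_def n by (simp only: power_Suc mult.assoc)
  have can: "coeff ([:1,1:]*[:1,1:]*a) i = of_nat (n choose i)" for i
    by (subst ea) (simp add: cL)
  have cbn: "coeff ([:1,-1:]*[:1,-1:]*b) i = (-1)^i * of_nat (n choose i)" for i
    by (subst eb) (simp add: cL)
  have hA3: "coeff A3 i = 2 * f3 i" for i unfolding A3_def coeff_add ca cb by (auto simp: f3_def)
  have hB3: "coeff B3 i = 2 * g3 i" for i unfolding B3_def coeff_add can cbn by (auto simp: g3_def)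
  have hA4: "coeff A4 i = 2 * f4 i" for i unfolding A4_def coeff_diff can cbn by (auto simp: f4_def)
  have hB4: "coeff B4 i = 2 * g4 i" for i unfolding B4_def coeff_diff ca cb by (auto simp: g4_def)
  have trm: "(if odd j \<and> odd k \<and> k \<le> n-2 \<and> j + k = N then of_nat (n choose j) * of_nat ((n-2) choose k) * (-1)^(m+k) else 0)
    + (if even j \<and> j \<le> n-2 \<and> even k \<and> j + k = N then of_nat ((n-2) choose j) * of_nat (n choose k) * (-1)^(m+k) else 0)
     = (-1)^m * (if j + k = N then f3 j * g3 k - f4 j * g4 k else 0)" for j k
  proof (cases "j + k = N")
    case True
    then have ev: "even (j+k)" unfolding N_def by simp
    show ?thesis
    proof (cases "even j")
      case True
      then have "even k" using ev by simp
      then show ?thesis using True \<open>j + k = N\<close> r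
        by (auto simp: f3_def g3_def f4_def g4_def power_add binomial_eq_0)
    next
      case False
      then have "odd k" using ev by simp
      then show ?thesis using False \<open>j + k = N\<close> r
        by (auto simp: f3_def g3_def f4_def g4_def power_add binomial_eq_0)
    qed
  qed simp
  have LHS: "(\<Sum>j<n+1. \<Sum>k<n+1.
      (if odd j \<and> odd k \<and> k \<le> n-2 \<and> j + k = N then of_nat (n choose j) * of_nat ((n-2) choose k) * (-1)^(m+k) else 0)
    + (if even j \<and> j \<le> n-2 \<and> even k \<and> j + k = N then of_nat ((n-2) choose j) * of_nat (n choose k) * (-1)^(m+k) else 0))
     = (-1)^m * ((\<Sum>j<n+1. \<Sum>k<n+1. if j + k = N then f3 j * g3 k else 0)
                - (\<Sum>j<n+1. \<Sum>k<n+1. if j + k = N then f4 j * g4 k else 0))"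
  proof -
    have ifd: "(if P then x - y else 0) = (if P then x else 0) - (if P then y else (0::real))" for P x y by simp
    show ?thesis
      by (simp only: trm ifd sum_distrib_left[symmetric] sum_subtractf)
  qed
  have S3: "(\<Sum>j<n+1. \<Sum>k<n+1. if j + k = N then f3 j * g3 k else 0) = coeff (A3 * B3) N / 4"
    by (subst CS) (auto simp: f3_def g3_def coeff_mult hA3 hB3 sum_divide_distrib n)
  have S4: "(\<Sum>j<n+1. \<Sum>k<n+1. if j + k = N then f4 j * g4 k else 0) = coeff (A4 * B4) N / 4"
    by (subst CS) (auto simp: f4_def g4_def coeff_mult hA4 hB4 sum_divide_distrib n)
  have P: "A3 * B3 - A4 * B4 = smult 4 ([:1,0,1:] * [:1,0,-1:]^r)"
  proof -
    have "A3 * B3 - A4 * B4 = (a*b) * 2 * ([:1,1:]*[:1,1:] + [:1,-1:]*[:1,-1:])"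
      unfolding A3_def B3_def A4_def B4_def by (rule polyid2)
    also have "a * b = [:1,0,-1:]^r" unfolding a_def b_def by (simp add: power_mult_distrib[symmetric])
    finally have "A3 * B3 - A4 * B4 = [:1,0,-1:]^r * 2 * [:2,0,2:]" by (simp only: PPMM)
    then show ?thesis by (simp add: algebra_simps numeral_poly smult_add_right)
  qed
  have cP: "coeff (A3 * B3 - A4 * B4) N = 4 * ((-1)^m * of_nat (r choose m)
        + (if m = 0 then 0 else (-1)^(m-1) * of_nat (r choose (m-1))))"
  proof -
    have "coeff (A3 * B3 - A4 * B4) N = 4 * coeff ([:1,0,1:] * [:1,0,-1:]^r) N" unfolding P by simp
    also have "\<dots> = 4 * (coeff ([:1,0,-1:]^r) N + (if N \<ge> 2 then coeff ([:1,0,-1:]^r) (N-2) else 0))"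
      using cQ1[of 1] by simp
    also have "\<dots> = 4 * ((-1)^m * of_nat (r choose m)
        + (if m = 0 then 0 else (-1)^(m-1) * of_nat (r choose (m-1))))"
    proof (cases m)
      case (Suc m')
      have "(2 * m - 2) = 2 * m'" using Suc by simp
      then show ?thesis unfolding N_def cQ using Suc by simp
    qed (simp add: N_def cQ)
    finally show ?thesis .
  qed
  have "(\<Sum>j<n+1. \<Sum>k<n+1.
      (if odd j \<and> odd k \<and> k \<le> n-2 \<and> j + k = N then of_nat (n choose j) * of_nat ((n-2) choose k) * (-1)^(m+k) else 0)
    + (if even j \<and> j \<le> n-2 \<and> even k \<and> j + k = N then of_nat ((n-2) choose j) * of_nat (n choose k) * (-1)^(m+k) else 0))
     = (-1)^m * (coeff (A3 * B3 - A4 * B4) N / 4)"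
    using LHS S3 S4 by (simp add: diff_divide_distrib)
  also have "\<dots> = of_nat (r choose m) - (if m = 0 then 0 else of_nat (r choose (m-1)))"
    unfolding cP
  proof (cases m)
    case (Suc m')
    then show "(- 1) ^ m * (4 * ((- 1) ^ m * real (r choose m) + (if m = 0 then 0 else (- 1) ^ (m - 1) * real (r choose (m - 1)))) / 4) =
      real (r choose m) - (if m = 0 then 0 else real (r choose (m - 1)))"
      by (simp add: field_simps)
  qed simp
  finally show ?thesis unfolding N_def r .
qed




definition cf1 :: "nat \<Rightarrow> nat \<Rightarrow> nat \<Rightarrow> real" where
  "cf1 n j k = (if odd j \<and> even k then of_nat (n choose j) * (-1)^(n-j) * (of_nat (n choose k) * (-1)^(n-k)) else 0)"
definition cf2 :: "nat \<Rightarrow> nat \<Rightarrow> nat \<Rightarrow> real" where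
  "cf2 n j k = (if odd j \<and> odd k \<and> k \<le> n-2 then - (of_nat (n choose 2) * (of_nat (n choose j) * (-1)^(n-j)) * (of_nat ((n-2) choose k) * (-1)^(n-2-k))) else 0)"
definition cf3 :: "nat \<Rightarrow> nat \<Rightarrow> nat \<Rightarrow> real" where
  "cf3 n j k = (if even j \<and> j \<le> n-2 \<and> even k then - (of_nat (n choose 2) * (of_nat ((n-2) choose j) * (-1)^(n-2-j)) * (of_nat (n choose k) * (-1)^(n-k))) else 0)"
definition cf4 :: "nat \<Rightarrow> nat \<Rightarrow> nat \<Rightarrow> real" where
  "cf4 n j k = (if even j \<and> j \<le> n-2 \<and> odd k \<and> k \<le> n-2 then (of_nat (n choose 2) * (of_nat ((n-2) choose j) * (-1)^(n-2-j))) * (of_nat (n choose 2) * (of_nat ((n-2) choose k) * (-1)^(n-2-k))) else 0)"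

definition mlist :: "nat \<Rightarrow> nat \<Rightarrow> nat \<Rightarrow> gm list" where
  "mlist n j k = [(cf1 n j k, (n-j)+(n-k), 0, j, k), (cf2 n j k, (n-j)+(n-2-k), 1, j, k),
                  (cf3 n j k, (n-2-j)+(n-k), 1, j, k), (cf4 n j k, (n-2-j)+(n-2-k), 2, j, k)]"

definition Ml :: "nat \<Rightarrow> gm list" where
  "Ml n = concat (map (\<lambda>j. concat (map (\<lambda>k. mlist n j k) [0..<n+1])) [0..<n+1])"

lemma sl_upt: "sum_list (map f [0..<N]) = (\<Sum>i<N. f i)"
  by (induction N) auto

lemma sl_concat: "sum_list (map f (concat xs)) = sum_list (map (\<lambda>x. sum_list (map f x)) xs)"
  by (induction xs) auto

definition Acoef :: "nat \<Rightarrow> real \<Rightarrow> real \<Rightarrow> nat \<Rightarrow> real" where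
  "Acoef n s c j = (if odd j then of_nat (n choose j) * (-1)^(n-j) * s^(n-j) else 0)
     - of_nat (n choose 2) * c * (if even j \<and> j \<le> n-2 then of_nat ((n-2) choose j) * (-1)^(n-2-j) * s^(n-2-j) else 0)"
definition Bcoef :: "nat \<Rightarrow> real \<Rightarrow> real \<Rightarrow> nat \<Rightarrow> real" where
  "Bcoef n s c j = (if even j then of_nat (n choose j) * (-1)^(n-j) * s^(n-j) else 0)
     - of_nat (n choose 2) * c * (if odd j \<and> j \<le> n-2 then of_nat ((n-2) choose j) * (-1)^(n-2-j) * s^(n-2-j) else 0)"

lemma setsum_filter: "M \<le> N \<Longrightarrow> (\<Sum>j\<in>{j. j \<le> (M::nat) \<and> P j}. f j) = (\<Sum>j<N+1. if P j \<and> j \<le> M then f j else (0::real))"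
proof -
  assume "M \<le> N"
  then have "{j. j \<le> M \<and> P j} = {j \<in> {..<N+1}. P j \<and> j \<le> M}" by auto
  then show ?thesis by (simp only: sum.inter_filter[OF finite_lessThan])
qed

lemma I1_eq: "n \<ge> 2 \<Longrightarrow> I1 n l w p = (\<Sum>j<n+1. Acoef n (partial_x l p) (partial_x (partial_x l) p) j * dx j w p)"
proof -
  assume n: "n \<ge> 2"
  let ?s = "partial_x l p" and ?c = "partial_x (partial_x l) p"
  have t: "(if odd j \<and> j \<le> n then of_nat (n choose j) * (-1)^(n-j) * ?s^(n-j) * dx j w p else 0)
     - of_nat (n choose 2) * ?c * (if even j \<and> j \<le> n-2 then of_nat ((n-2) choose j) * (-1)^(n-2-j) * ?s^(n-2-j) * dx j w p else 0)
     = Acoef n ?s ?c j * dx j w p" if "j < n+1" for j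
    using that by (auto simp: Acoef_def algebra_simps)
  show ?thesis
    unfolding I1_def setsum_filter[where M=n and N=n, OF order.refl] setsum_filter[where M="n-2" and N=n, OF diff_le_self] sum_distrib_left sum_subtractf[symmetric]
    using n t by (intro sum.cong) auto
qed

lemma I2_eq: "n \<ge> 2 \<Longrightarrow> I2 n l w p = (\<Sum>j<n+1. Bcoef n (partial_x l p) (partial_x (partial_x l) p) j * dx j w p)"
proof -
  assume n: "n \<ge> 2"
  let ?s = "partial_x l p" and ?c = "partial_x (partial_x l) p"
  have t: "(if even j \<and> j \<le> n then of_nat (n choose j) * (-1)^(n-j) * ?s^(n-j) * dx j w p else 0)
     - of_nat (n choose 2) * ?c * (if odd j \<and> j \<le> n-2 then of_nat ((n-2) choose j) * (-1)^(n-2-j) * ?s^(n-2-j) * dx j w p else 0)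
     = Bcoef n ?s ?c j * dx j w p" if "j < n+1" for j
    using that by (auto simp: Bcoef_def algebra_simps)
  show ?thesis
    unfolding I2_def setsum_filter[where M=n and N=n, OF order.refl] setsum_filter[where M="n-2" and N=n, OF diff_le_self] sum_distrib_left sum_subtractf[symmetric]
    using n t by (intro sum.cong) auto
qed

lemma AB_mono: "Acoef n s c j * u j * (Bcoef n s c k * u k) = sum_list (map (gmono s c u) (mlist n j k))"
  by (auto simp: Acoef_def Bcoef_def mlist_def cf1_def cf2_def cf3_def cf4_def power_add power2_eq_square algebra_simps)

lemma Ml_sum: "sum_list (map F (Ml n)) = (\<Sum>j<n+1. \<Sum>k<n+1. sum_list (map F (mlist n j k)))"
  unfolding Ml_def by (simp only: sl_concat map_map o_def sl_upt)

lemma I12_Ml: "n \<ge> 2 \<Longrightarrow> I1 n l w p * I2 n l w p = sum_list (map (gmono (partial_x l p) (partial_x (partial_x l) p) (\<lambda>i. dx i w p)) (Ml n))"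
  unfolding I1_eq I2_eq Ml_sum sum_product
  by (intro sum.cong refl) (rule AB_mono[where u="\<lambda>i. dx i w p", simplified])




definition redm :: "gm \<Rightarrow> gm list \<times> dm list" where
  "redm e = (case e of (k,a,b,j,j') \<Rightarrow> red k a b (min j j') (max j j' - min j j'))"

lemma mono_redm: "gmono s c u e = SG s c u (fst (redm e)) + SD s c u (snd (redm e))"
proof -
  obtain k a b j j' where e: "e = (k,a,b,j,j')" by (cases e) auto
  have uu: "u j * u j' = u (min j j') * u (max j j')"
    by (cases "j \<le> j'") (auto simp: min_def max_def mult.commute)
  have mm: "min j j' + (max j j' - min j j') = max j j'" by simp
  have "gmono s c u e = k * s ^ a * c ^ b * (u (min j j') * u (max j j'))" using uu e by (simp add: mult.assoc)
  also have "\<dots> = gmono s c u (k,a,b,min j j', min j j' + (max j j' - min j j'))"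
    by (simp only: mm gmono.simps mult.assoc)
  also have "\<dots> = SG s c u (fst (red k a b (min j j') (max j j' - min j j'))) + SD s c u (snd (red k a b (min j j') (max j j' - min j j')))"
    by (rule red_correct)
  finally show ?thesis by (simp add: redm_def e)
qed

lemma red_list: "sum_list (map (gmono s c u) L) =
   SG s c u (concat (map (fst \<circ> redm) L)) + SD s c u (concat (map (snd \<circ> redm) L))"
  by (induction L) (auto simp: mono_redm)

definition gfun :: "gm list \<Rightarrow> nat \<Rightarrow> nat \<Rightarrow> nat \<Rightarrow> nat \<Rightarrow> real" where
  "gfun L a b i j = sum_list (map fst (filter (\<lambda>(k,a',b',i',j'). a' = a \<and> b' = b \<and> i' = i \<and> j' = j) L))"

lemma delta_sum: "finite A \<Longrightarrow> x0 \<in> A \<Longrightarrow> (\<Sum>x\<in>A. if P \<and> x = x0 then f x else 0) = (if P then f x0 else (0::real))"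
  by (cases P) (simp_all add: sum.delta')

lemma gfun_conv:
  assumes "\<forall>(k,a',b',i',j')\<in>set L. a' \<le> D \<and> b' \<le> D \<and> i' \<le> D \<and> j' \<le> D"
  shows "sum_list (map (gmono s c u) L) =
    (\<Sum>a\<le>D. \<Sum>b\<le>D. \<Sum>i\<le>D. \<Sum>j\<le>D. gfun L a b i j * s^a * c^b * u i * u j)"
  using assms
proof (induction L)
  case Nil
  then show ?case by (simp add: gfun_def)
next
  case (Cons e L)
  obtain k a0 b0 i0 j0 where e: "e = (k,a0,b0,i0,j0)" by (cases e) auto
  have g: "gfun (e # L) a b i j = (if a = a0 \<and> b = b0 \<and> i = i0 \<and> j = j0 then k else 0) + gfun L a b i j" for a b i j
    by (simp add: gfun_def e)
  have bnd: "a0 \<le> D" "b0 \<le> D" "i0 \<le> D" "j0 \<le> D" using Cons.prems e by auto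
  have d: "(\<Sum>a\<le>D. \<Sum>b\<le>D. \<Sum>i\<le>D. \<Sum>j\<le>D. (if a = a0 \<and> b = b0 \<and> i = i0 \<and> j = j0 then k else 0) * s^a * c^b * u i * u j)
     = gmono s c u e"
  proof -
    have bb: "a0 \<in> {..D}" "b0 \<in> {..D}" "i0 \<in> {..D}" "j0 \<in> {..D}" using bnd by auto
    have "(\<Sum>a\<le>D. \<Sum>b\<le>D. \<Sum>i\<le>D. \<Sum>j\<le>D. (if a = a0 \<and> b = b0 \<and> i = i0 \<and> j = j0 then k else 0) * s^a * c^b * u i * u j)
      = (\<Sum>a\<le>D. \<Sum>b\<le>D. \<Sum>i\<le>D. \<Sum>j\<le>D. if (((True \<and> a = a0) \<and> b = b0) \<and> i = i0) \<and> j = j0 then k * s^a * c^b * u i * u j else 0)"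
      by (intro sum.cong refl) auto
    also have "\<dots> = gmono s c u e"
      by (simp only: delta_sum finite_atMost bb if_True) (simp add: e)
    finally show ?thesis .
  qed
  show ?case
    using Cons d by (simp add: g distrib_right sum.distrib)
qed

definition rfun :: "(nat \<Rightarrow> nat \<Rightarrow> nat \<Rightarrow> bool) \<Rightarrow> dm list \<Rightarrow> nat \<Rightarrow> nat \<Rightarrow> nat \<Rightarrow> real" where
  "rfun P L m a b = sum_list (map fst (filter (\<lambda>(k,a',b',m'). a' = a \<and> b' = b \<and> m' = m \<and> P a' b' m') L))"

lemma rfun_conv:
  assumes "\<forall>(k,a',b',m')\<in>set L. a' \<le> D \<and> b' \<le> D"
  shows "sum_list (map (\<lambda>(k,a',b',m'). if m' = m \<and> P a' b' m' then k * s^a' * c^b' else 0) L) =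
    (\<Sum>a\<le>D. \<Sum>b\<le>D. rfun P L m a b * s^a * c^b)"
  using assms
proof (induction L)
  case Nil
  then show ?case by (simp add: rfun_def)
next
  case (Cons e L)
  obtain k a0 b0 m0 where e: "e = (k,a0,b0,m0)" by (cases e) auto
  have g: "rfun P (e # L) m a b = (if m0 = m \<and> P a0 b0 m0 \<and> a = a0 \<and> b = b0 then k else 0) + rfun P L m a b" for a b
    by (auto simp: rfun_def e)
  have bnd: "a0 \<le> D" "b0 \<le> D" using Cons.prems e by auto
  have d: "(\<Sum>a\<le>D. \<Sum>b\<le>D. (if m0 = m \<and> P a0 b0 m0 \<and> a = a0 \<and> b = b0 then k else 0) * s^a * c^b)
     = (if m0 = m \<and> P a0 b0 m0 then k * s^a0 * c^b0 else 0)"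
  proof -
    have bb: "a0 \<in> {..D}" "b0 \<in> {..D}" using bnd by auto
    have "(\<Sum>a\<le>D. \<Sum>b\<le>D. (if m0 = m \<and> P a0 b0 m0 \<and> a = a0 \<and> b = b0 then k else 0) * s^a * c^b)
      = (\<Sum>a\<le>D. \<Sum>b\<le>D. if ((m0 = m \<and> P a0 b0 m0) \<and> a = a0) \<and> b = b0 then k * s^a * c^b else 0)"
      by (intro sum.cong refl) auto
    also have "\<dots> = (if m0 = m \<and> P a0 b0 m0 then k * s^a0 * c^b0 else 0)"
      by (simp only: delta_sum finite_atMost bb)
    finally show ?thesis .
  qed
  show ?case
    using Cons d by (simp add: g[unfolded e] distrib_right sum.distrib e)
qed

lemma mono_deriv:
  assumes S: "(S has_real_derivative C) (at x)" and U: "\<And>i. ((\<lambda>y. U y i) has_real_derivative U x (Suc i)) (at x)"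
  shows "((\<lambda>y. sum_list (map (gmono (S y) C (U y)) L)) has_real_derivative SG (S x) C (U x) L) (at x)"
proof (induction L)
  case Nil
  then show ?case by simp
next
  case (Cons e L)
  obtain k a b i j where e: "e = (k,a,b,i,j)" by (cases e) auto
  have "((\<lambda>y. gmono (S y) C (U y) e) has_real_derivative dmono (S x) C (U x) e) (at x)"
    unfolding e gmono.simps dmono.simps
    by (rule derivative_eq_intros S U refl | simp)+ (simp add: algebra_simps)
  from DERIV_add[OF this Cons] show ?case by simp
qed




definition TLx :: "nat \<Rightarrow> real \<Rightarrow> real \<Rightarrow> nat \<Rightarrow> gm \<Rightarrow> real" where
  "TLx n s c m x = (case x of (k0,a,b,j,j') \<Rightarrow>
     if ew a b (min j j') (max j j' - min j j') = 2*n-1 then Lval s c k0 a b (min j j') (max j j' - min j j') m else 0)"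

lemma mk_cases:
  obtains (le) d where "min j k = j" "max j k - min j k = d" "k = j + d"
        | (gt) d where "min j k = k" "max j k - min j k = d" "j = k + (d::nat)"
proof (cases "j \<le> k")
  case True
  then obtain d where "k = j + d" using le_Suc_ex by blast
  then show ?thesis using le True by (simp add: min_def max_def)
next
  case False
  then obtain d where "j = k + d" using le_Suc_ex[of k j] by auto
  then show ?thesis using gt False by (simp add: min_def max_def)
qed

lemma ew_mk: "ew a b (min j k) (max j k - min j k) = a + b + j + k - (j+k) mod 2"
proof (cases rule: mk_cases[of j k])
  case (le d)
  have "(j + k) mod 2 = d mod 2" using le(3) by presburger
  then show ?thesis unfolding ew_def le(1,2) using le(3) by simp
next
  case (gt d)
  have "(j + k) mod 2 = d mod 2" using gt(3) by presburger
  then show ?thesis unfolding ew_def gt(1,2) using gt(3) by simp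
qed

lemma idx_mk: "min (j::nat) k + (max j k - min j k) div 2 = (j + k) div 2"
proof (cases rule: mk_cases[of j k])
  case (le d)
  show ?thesis unfolding le(1,2) le(3) by presburger
next
  case (gt d)
  show ?thesis unfolding gt(1,2) gt(3) by presburger
qed

lemma par_mk: "even (max (j::nat) k - min j k) \<longleftrightarrow> even (j + k)"
proof (cases rule: mk_cases[of j k])
  case (le d)
  show ?thesis unfolding le(2) le(3) by presburger
next
  case (gt d)
  show ?thesis unfolding gt(2) gt(3) by presburger
qed

lemma neg1_shift: "x = 2*y + z \<Longrightarrow> (-1::real)^x = (-1)^z"
  by (simp add: power_add power_mult)

lemma sg1:
  assumes "odd j" "even k" "j + k = 2*m+1"
  shows "(-1::real)^((max j k - min j k) div 2) * real (max j k - min j k) = (-1)^(k+m) * (real j - real k)"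
proof (cases rule: mk_cases[of j k])
  case (le d)
  have "odd d" using le(3) assms(1,2) by simp
  then obtain q where q: "d = 2*q+1" using oddE by blast
  have m: "m = j + q" using q le(3) assms(3) by arith
  have "(-1::real)^(k+m) = (-1)^(q+1)" by (rule neg1_shift[of _ "j+q"]) (use q le(3) m in arith)
  then show ?thesis unfolding le(2) using q le(3) by (simp add: algebra_simps)
next
  case (gt d)
  have "odd d" using gt(3) assms(1,2) by simp
  then obtain q where q: "d = 2*q+1" using oddE by blast
  have m: "m = k + q" using q gt(3) assms(3) by arith
  have "(-1::real)^(k+m) = (-1)^q" by (rule neg1_shift[of _ "k"]) (use q gt(3) m in arith)
  then show ?thesis unfolding gt(2) using q gt(3) by simp
qed

lemma sg2:
  assumes "j + k = 2*(m::nat)"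
  shows "(-1::real)^((max j k - min j k) div 2) = (-1)^(m+k)"
proof (cases rule: mk_cases[of j k])
  case (le d)
  have "even d" using le(3) assms by (metis dvd_add_right_iff dvd_triv_left add.assoc mult_2)
  then obtain q where q: "d = 2*q" by blast
  have m: "m = j + q" using q le(3) assms by arith
  have "(-1::real)^(m+k) = (-1)^q" by (rule neg1_shift[of _ "j+q"]) (use q le(3) m in arith)
  then show ?thesis unfolding le(2) using q by simp
next
  case (gt d)
  have "even d" using gt(3) assms by (metis dvd_add_right_iff dvd_triv_left add.assoc mult_2 add.commute)
  then obtain q where q: "d = 2*q" by blast
  have m: "m = k + q" using q gt(3) assms by arith
  have "(-1::real)^(m+k) = (-1)^q" by (rule neg1_shift[of _ "k"]) (use q gt(3) m in arith)
  then show ?thesis unfolding gt(2) using q by simp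
qed

lemma m1p: "(-1::real)^x = (if even x then 1 else -1)"
  by (simp add: minus_one_power_iff)

lemma Lval0: "Lval s c 0 a b i d m = 0"
  by (simp add: Lval_def)

lemma TL1:
  assumes "j \<le> n" "k \<le> n"
  shows "TLx n s c m (cf1 n j k, (n-j)+(n-k), 0, j, k) =
    (if odd j \<and> even k \<and> j + k = 2*m+1 then of_nat (n choose j) * of_nat (n choose k) * (-1)^(k+m) * (of_nat j - of_nat k)
        * ((2 * of_nat n - 2 * of_nat m - 1)/2 * (s^(2*n-2*m-2) * c)) else 0)"
proof (cases "odd j \<and> even k")
  case False
  then have "cf1 n j k = 0" by (auto simp: cf1_def)
  then show ?thesis using False by (auto simp: TLx_def Lval0)
next
  case True
  let ?i = "min j k" and ?d = "max j k - min j k" and ?a = "(n-j)+(n-k)"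
  have jk: "odd (j+k)" using True by simp
  have ew: "ew ?a 0 ?i ?d = 2*n-1"
  proof -
    have "(j+k) mod 2 = 1" using jk by presburger
    then show ?thesis unfolding ew_mk using assms by simp
  qed
  have dodd: "\<not> even ?d" using par_mk[of j k] jk by simp
  have T: "TLx n s c m (cf1 n j k, ?a, 0, j, k) = Lval s c (cf1 n j k) ?a 0 ?i ?d m"
    unfolding TLx_def using ew by simp
  show ?thesis
  proof (cases "j + k = 2*m+1")
    case False
    have "m \<noteq> ?i + ?d div 2" unfolding idx_mk using False jk by presburger
    then show ?thesis unfolding T Lval_def using False by simp
  next
    case eq: True
    have mi: "m = ?i + ?d div 2" unfolding idx_mk using eq by presburger
    have a: "?a = 2*n - 2*m - 1" "?a - 1 = 2*n-2*m-2" "real ?a = 2 * real n - 2 * real m - 1"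
      using eq assms by auto
    have sg: "(-1::real)^(n-j) * (-1)^(n-k) = -1"
    proof -
      have "(-1::real)^(n-j) * (-1)^(n-k) = (-1)^?a" by (simp add: power_add)
      also have "\<dots> = -1" unfolding a(1) using eq assms by (simp add: m1p)
      finally show ?thesis .
    qed
    have cf: "cf1 n j k = - (of_nat (n choose j) * of_nat (n choose k))"
      using True sg unfolding cf1_def by (simp add: algebra_simps)
    have s1: "(-1::real)^(?d div 2) * real ?d = (-1)^(k+m) * (real j - real k)"
      using sg1[of j k m] True eq by simp
    obtain dd where dd: "?d = dd" by blast
    obtain aa where aa: "?a = aa" by blast
    have "Lval s c (cf1 n j k) ?a 0 ?i ?d m
        = - cf1 n j k * (-1)^(?d div 2) * (of_nat ?d / 2) * of_nat ?a * s^(?a-1) * c^(0+1)"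
      unfolding Lval_def if_P[OF mi] if_not_P[OF dodd] ..
    also have "\<dots> = - cf1 n j k * ((-1)^(dd div 2) * of_nat dd) / 2 * of_nat aa * s^(aa-1) * c"
      unfolding dd aa by simp
    also have "\<dots> = of_nat (n choose j) * of_nat (n choose k) * (-1)^(k+m) * (of_nat j - of_nat k)
        * ((2 * of_nat n - 2 * of_nat m - 1)/2 * (s^(2*n-2*m-2) * c))"
    proof -
      have s1': "(-1::real)^(dd div 2) * real dd = (-1)^(k+m) * (real j - real k)" using s1 dd by simp
      have a2: "aa - 1 = 2*n-2*m-2" "real aa = 2 * real n - 2 * real m - 1" using a aa by auto
      show ?thesis unfolding s1' a2 cf by (simp add: algebra_simps)
    qed
    finally show ?thesis unfolding T using True eq by simp
  qed
qed

lemma TLe: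
  assumes "j + k + a = 2*n - 2" "even (j+k)" "n \<ge> 1"
  shows "TLx n s c m (cf, a, 1, j, k) = (if j + k = 2*m then cf * (-1)^(m+k) * (s^(2*n-2*m-2) * c) else 0)"
proof -
  let ?i = "min j k" and ?d = "max j k - min j k"
  have ew: "ew a 1 ?i ?d = 2*n-1"
  proof -
    have "(j+k) mod 2 = 0" using assms(2) by presburger
    then show ?thesis unfolding ew_mk using assms by simp
  qed
  have deven: "even ?d" using par_mk[of j k] assms(2) by simp
  have T: "TLx n s c m (cf, a, 1, j, k) = Lval s c cf a 1 ?i ?d m"
    unfolding TLx_def using ew by simp
  show ?thesis
  proof (cases "j + k = 2*m")
    case False
    have "m \<noteq> ?i + ?d div 2" unfolding idx_mk using False assms(2) by presburger
    then show ?thesis unfolding T Lval_def using False by simp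
  next
    case eq: True
    have mi: "m = ?i + ?d div 2" unfolding idx_mk using eq by presburger
    have a: "a = 2*n-2*m-2" using eq assms by auto
    have "Lval s c cf a 1 ?i ?d m = cf * (-1)^(?d div 2) * s^a * c^(1::nat)"
      unfolding Lval_def if_P[OF mi] if_P[OF deven] ..
    also have "\<dots> = cf * (-1)^(m+k) * (s^(2*n-2*m-2) * c)"
      unfolding sg2[OF eq] a by simp
    finally show ?thesis unfolding T using eq by simp
  qed
qed

lemma TL2:
  assumes "j \<le> n" "k \<le> n" "n \<ge> 2"
  shows "TLx n s c m (cf2 n j k, (n-j)+(n-2-k), 1, j, k) =
    (if odd j \<and> odd k \<and> k \<le> n-2 \<and> j + k = 2*m then of_nat (n choose j) * of_nat ((n-2) choose k) * (-1)^(m+k) else 0)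
      * (- of_nat (n choose 2) * (s^(2*n-2*m-2) * c))"
proof (cases "odd j \<and> odd k \<and> k \<le> n-2")
  case False
  then have "cf2 n j k = 0" by (auto simp: cf2_def)
  then show ?thesis using False by (auto simp: TLx_def Lval0)
next
  case True
  have e: "even (j+k)" using True by simp
  have sg: "(-1::real)^(n-j) * (-1)^(n-2-k) = 1"
  proof -
    have "(-1::real)^(n-j) * (-1)^(n-2-k) = (-1)^((n-j)+(n-2-k))" by (simp add: power_add)
    also have "\<dots> = 1" using e True assms by (simp add: m1p) presburger
    finally show ?thesis .
  qed
  have cf: "cf2 n j k = - (of_nat (n choose 2) * of_nat (n choose j) * of_nat ((n-2) choose k))"
    using True sg unfolding cf2_def by (simp add: algebra_simps)
  have T: "TLx n s c m (cf2 n j k, (n-j)+(n-2-k), 1, j, k) = (if j + k = 2*m then cf2 n j k * (-1)^(m+k) * (s^(2*n-2*m-2) * c) else 0)"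
    by (rule TLe) (use True assms e in auto)
  show ?thesis unfolding T unfolding cf using True by (simp add: algebra_simps)
qed

lemma TL3:
  assumes "j \<le> n" "k \<le> n" "n \<ge> 2"
  shows "TLx n s c m (cf3 n j k, (n-2-j)+(n-k), 1, j, k) =
    (if even j \<and> j \<le> n-2 \<and> even k \<and> j + k = 2*m then of_nat ((n-2) choose j) * of_nat (n choose k) * (-1)^(m+k) else 0)
      * (- of_nat (n choose 2) * (s^(2*n-2*m-2) * c))"
proof (cases "even j \<and> j \<le> n-2 \<and> even k")
  case False
  then have "cf3 n j k = 0" by (auto simp: cf3_def)
  then show ?thesis using False by (auto simp: TLx_def Lval0)
next
  case True
  have e: "even (j+k)" using True by simp
  have sg: "(-1::real)^(n-2-j) * (-1)^(n-k) = 1"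
  proof -
    have "(-1::real)^(n-2-j) * (-1)^(n-k) = (-1)^((n-2-j)+(n-k))" by (simp add: power_add)
    also have "\<dots> = 1" using e True assms by (simp add: m1p) presburger
    finally show ?thesis .
  qed
  have cf: "cf3 n j k = - (of_nat (n choose 2) * of_nat ((n-2) choose j) * of_nat (n choose k))"
    using True sg unfolding cf3_def by (simp add: algebra_simps)
  have T: "TLx n s c m (cf3 n j k, (n-2-j)+(n-k), 1, j, k) = (if j + k = 2*m then cf3 n j k * (-1)^(m+k) * (s^(2*n-2*m-2) * c) else 0)"
    by (rule TLe) (use True assms e in auto)
  show ?thesis unfolding T unfolding cf using True by (simp add: algebra_simps)
qed

lemma TL4:
  assumes "j \<le> n" "k \<le> n" "n \<ge> 2"
  shows "TLx n s c m (cf4 n j k, (n-2-j)+(n-2-k), 2, j, k) = 0"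
proof (cases "even j \<and> j \<le> n-2 \<and> odd k \<and> k \<le> n-2")
  case False
  then have "cf4 n j k = 0" by (auto simp: cf4_def)
  then show ?thesis using False by (auto simp: TLx_def Lval0)
next
  case True
  have "(j+k) mod 2 = 1" using True by presburger
  then have "ew ((n-2-j)+(n-2-k)) 2 (min j k) (max j k - min j k) = 2*n-3"
    unfolding ew_mk using True assms by (simp; linarith)
  then show ?thesis using assms by (simp add: TLx_def)
qed

lemma ifm: "(if P then x else (0::real)) * y = (if P then x * y else 0)"
  by simp

lemma arith_final:
  assumes "n \<ge> 2" "m < n"
  shows "(2 * of_nat n - 2 * of_nat m - 1)/2 * (of_nat n * of_nat ((n-1) choose m))
     + (- of_nat (n choose 2)) * (of_nat ((n-2) choose m) - (if m = 0 then 0 else of_nat ((n-2) choose (m-1))))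
     = of_nat (n^2) / 2 * (of_nat ((n-1) choose m) :: real)"
proof -
  obtain r where n: "n = Suc (Suc r)" using assms by (metis add_2_eq_Suc le_Suc_ex)
  have c2: "real (n choose 2) * 2 = real n * (real n - 1)"
  proof -
    have "Suc (Suc r) * (Suc r choose 1) = (Suc (Suc r) choose 2) * 2"
      using Suc_times_binomial_eq[of "Suc r" 1] by (simp add: numeral_2_eq_2)
    then have "real (Suc (Suc r)) * real (Suc r) = real (Suc (Suc r) choose 2) * 2"
      by (metis choose_one of_nat_mult of_nat_numeral)
    then show ?thesis unfolding n by simp
  qed
  have b1: "real (Suc r) * real (r choose m) = (real (Suc r) - real m) * real (Suc r choose m)"
  proof -
    have "(Suc r - m) * (Suc r choose m) = Suc r * (r choose m)" using binomial_absorb_comp[of "Suc r" m] by simp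
    then have "real (Suc r - m) * real (Suc r choose m) = real (Suc r) * real (r choose m)"
      by (metis of_nat_mult)
    then show ?thesis using assms n by (simp add: of_nat_diff)
  qed
  have b2: "real (Suc r) * (if m = 0 then 0 else real (r choose (m-1))) = real m * real (Suc r choose m)"
  proof (cases m)
    case (Suc m')
    have "Suc r * (r choose m') = (Suc r choose Suc m') * Suc m'" by (rule Suc_times_binomial_eq)
    then have "real (Suc r) * real (r choose m') = real (Suc r choose Suc m') * real (Suc m')"
      by (metis of_nat_mult)
    then show ?thesis using Suc by simp
  qed simp
  have key: "real (n choose 2) * (real (r choose m) - (if m = 0 then 0 else real (r choose (m-1))))
      = real n / 2 * ((real (Suc r) - 2 * real m) * real (Suc r choose m))"
  proof -
    have "real (n choose 2) * (real (r choose m) - (if m = 0 then 0 else real (r choose (m-1))))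
       = real n / 2 * (real (Suc r) * real (r choose m) - real (Suc r) * (if m = 0 then 0 else real (r choose (m-1))))"
    proof -
      have c2': "real (n choose 2) = real n * real (Suc r) / 2" using c2 n by simp
      show ?thesis unfolding c2' by (simp add: field_simps)
    qed
    also have "\<dots> = real n / 2 * ((real (Suc r) - 2 * real m) * real (Suc r choose m))"
      unfolding b1 b2 by (simp add: algebra_simps)
    finally show ?thesis .
  qed
  have nm: "n - 2 = r" "n - 1 = Suc r" using n by auto
  have "(2 * of_nat n - 2 * of_nat m - 1)/2 * (of_nat n * of_nat ((n-1) choose m))
     + (- of_nat (n choose 2)) * (of_nat ((n-2) choose m) - (if m = 0 then 0 else of_nat ((n-2) choose (m-1))))
     = (2 * real n - 2 * real m - 1)/2 * (real n * real (Suc r choose m))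
       - real n / 2 * ((real (Suc r) - 2 * real m) * real (Suc r choose m))"
    unfolding nm using key by simp
  also have "\<dots> = real n * real n / 2 * real (Suc r choose m)"
    unfolding n by (simp add: field_simps)
  finally show ?thesis unfolding nm by (simp add: power2_eq_square)
qed

lemma TLsum:
  assumes "n \<ge> 2" "m < n"
  shows "sum_list (map (TLx n s c m) (Ml n)) = of_nat (n^2) / 2 * of_nat ((n-1) choose m) * s^(2*n-2*m-2) * c"
proof -
  let ?K1 = "(2 * of_nat n - 2 * of_nat m - 1)/2 * (s^(2*n-2*m-2) * c)"
  let ?K2 = "- of_nat (n choose 2) * (s^(2*n-2*m-2) * c)"
  define A where "A j k = (if odd j \<and> even k \<and> j + k = 2*m+1
            then of_nat (n choose j) * of_nat (n choose k) * (-1)^(k+m) * (of_nat j - of_nat k) else (0::real))" for j k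
  define B where "B j k = (if odd j \<and> odd k \<and> k \<le> n-2 \<and> j + k = 2*m then of_nat (n choose j) * of_nat ((n-2) choose k) * (-1)^(m+k) else 0)
    + (if even j \<and> j \<le> n-2 \<and> even k \<and> j + k = 2*m then of_nat ((n-2) choose j) * of_nat (n choose k) * (-1)^(m+k) else (0::real))" for j k
  have t: "sum_list (map (TLx n s c m) (mlist n j k)) = A j k * ?K1 + B j k * ?K2" if "j < n+1" "k < n+1" for j k
  proof -
    have jk: "j \<le> n" "k \<le> n" using that by auto
    show ?thesis unfolding mlist_def
      using TL1[OF jk, of s c m] TL2[OF jk assms(1), of s c m] TL3[OF jk assms(1), of s c m] TL4[OF jk assms(1), of s c m]
      by (simp add: A_def B_def ifm distrib_right)
  qed
  have "sum_list (map (TLx n s c m) (Ml n)) = (\<Sum>j<n+1. \<Sum>k<n+1. A j k * ?K1 + B j k * ?K2)"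
    unfolding Ml_sum using t by simp
  also have "\<dots> = (\<Sum>j<n+1. \<Sum>k<n+1. A j k) * ?K1 + (\<Sum>j<n+1. \<Sum>k<n+1. B j k) * ?K2"
    by (simp only: sum.distrib sum_distrib_right[symmetric])
  also have "(\<Sum>j<n+1. \<Sum>k<n+1. A j k) = of_nat n * of_nat ((n-1) choose m)"
    unfolding A_def by (rule comb1) (use assms in simp)
  also have "(\<Sum>j<n+1. \<Sum>k<n+1. B j k) = of_nat ((n-2) choose m) - (if m = 0 then 0 else of_nat ((n-2) choose (m-1)))"
    unfolding B_def by (rule comb2[OF assms(1)])
  finally have "sum_list (map (TLx n s c m) (Ml n)) =
     ((2 * of_nat n - 2 * of_nat m - 1)/2 * (of_nat n * of_nat ((n-1) choose m))
     + (- of_nat (n choose 2)) * (of_nat ((n-2) choose m) - (if m = 0 then 0 else of_nat ((n-2) choose (m-1))))) * (s^(2*n-2*m-2) * c)"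
    by (simp add: algebra_simps)
  then show ?thesis unfolding arith_final[OF assms] by simp
qed

definition Gl :: "nat \<Rightarrow> gm list" where "Gl n = concat (map (fst \<circ> redm) (Ml n))"
definition Dl :: "nat \<Rightarrow> dm list" where "Dl n = concat (map (snd \<circ> redm) (Ml n))"

lemma Ml_mem: "x \<in> set (Ml n) \<Longrightarrow> \<exists>j k. j \<le> n \<and> k \<le> n \<and> x \<in> set (mlist n j k)"
  unfolding Ml_def by (auto simp del: upt_Suc simp: less_Suc_eq_le; blast)

lemma slz: "(\<forall>e\<in>set L. f e = 0) \<Longrightarrow> sum_list (map f L) = (0::real)"
  by (induction L) auto

lemma Ml_props:
  assumes "x \<in> set (Ml n)" "n \<ge> 2"
  shows "case x of (k0,a,b,j,j') \<Rightarrow> a \<le> 2*n \<and> b \<le> 2 \<and> j \<le> n \<and> j' \<le> n \<and>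
     (k0 \<noteq> 0 \<longrightarrow> (\<exists>q. 2*n-1 = ew a b (min j j') (max j j' - min j j') + 2*q))"
proof -
  obtain j k where jk: "j \<le> n" "k \<le> n" "x \<in> set (mlist n j k)" using Ml_mem[OF assms(1)] by blast
  consider (a) "x = (cf1 n j k, (n-j)+(n-k), 0, j, k)" | (b) "x = (cf2 n j k, (n-j)+(n-2-k), 1, j, k)"
    | (c) "x = (cf3 n j k, (n-2-j)+(n-k), 1, j, k)" | (d) "x = (cf4 n j k, (n-2-j)+(n-2-k), 2, j, k)"
    using jk(3) unfolding mlist_def by auto
  then show ?thesis
  proof cases
    case a
    have "cf1 n j k \<noteq> 0 \<Longrightarrow> 2*n-1 = ew ((n-j)+(n-k)) 0 (min j k) (max j k - min j k) + 2*0"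
    proof -
      assume "cf1 n j k \<noteq> 0"
      then have "odd j" "even k" by (auto simp: cf1_def split: if_splits)
      then have "(j+k) mod 2 = 1" by presburger
      then show ?thesis unfolding ew_mk using jk by simp
    qed
    then show ?thesis using a jk by fastforce
  next
    case b
    have "cf2 n j k \<noteq> 0 \<Longrightarrow> 2*n-1 = ew ((n-j)+(n-2-k)) 1 (min j k) (max j k - min j k) + 2*0"
    proof -
      assume "cf2 n j k \<noteq> 0"
      then have "odd j" "odd k" "k \<le> n-2" by (auto simp: cf2_def split: if_splits)
      then have "(j+k) mod 2 = 0" by presburger
      then show ?thesis unfolding ew_mk using jk \<open>k \<le> n-2\<close> assms(2) by simp
    qed
    then show ?thesis using b jk by fastforce
  next
    case c
    have "cf3 n j k \<noteq> 0 \<Longrightarrow> 2*n-1 = ew ((n-2-j)+(n-k)) 1 (min j k) (max j k - min j k) + 2*0"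
    proof -
      assume "cf3 n j k \<noteq> 0"
      then have "even j" "even k" "j \<le> n-2" by (auto simp: cf3_def split: if_splits)
      then have "(j+k) mod 2 = 0" by presburger
      then show ?thesis unfolding ew_mk using jk \<open>j \<le> n-2\<close> assms(2) by simp
    qed
    then show ?thesis using c jk by fastforce
  next
    case d
    have "cf4 n j k \<noteq> 0 \<Longrightarrow> 2*n-1 = ew ((n-2-j)+(n-2-k)) 2 (min j k) (max j k - min j k) + 2*1"
    proof -
      assume "cf4 n j k \<noteq> 0"
      then have "even j" "odd k" "j \<le> n-2" "k \<le> n-2" by (auto simp: cf4_def split: if_splits)
      then have "(j+k) mod 2 = 1" by presburger
      then show ?thesis unfolding ew_mk using jk \<open>j \<le> n-2\<close> \<open>k \<le> n-2\<close> assms(2) by (simp; linarith)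
    qed
    then show ?thesis using d jk by fastforce
  qed
qed

lemma Gl_bounds:
  assumes "e \<in> set (Gl n)" "n \<ge> 2"
  shows "case e of (k,a,b,i,j) \<Rightarrow> a \<le> 2*n+2 \<and> b \<le> 2*n+2 \<and> i \<le> 2*n+2 \<and> j \<le> 2*n+2"
proof -
  obtain x where x: "x \<in> set (Ml n)" "e \<in> set (fst (redm x))" using assms(1) unfolding Gl_def by auto
  obtain k0 a b j j' where xx: "x = (k0,a,b,j,j')" by (cases x) auto
  have p: "a \<le> 2*n" "b \<le> 2" "j \<le> n" "j' \<le> n" using Ml_props[OF x(1) assms(2)] xx by auto
  have "e \<in> set (fst (red k0 a b (min j j') (max j j' - min j j')))" using x(2) xx by (simp add: redm_def)
  then show ?thesis using red_bounds[of k0 a b "min j j'" "max j j' - min j j'"] p by fastforce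
qed

lemma Dl_props:
  assumes "e \<in> set (Dl n)" "n \<ge> 2"
  shows "case e of (k,a,b,m) \<Rightarrow> a \<le> 2*n+2 \<and> b \<le> 2*n+2 \<and> (k \<noteq> 0 \<longrightarrow> (\<exists>q. 2*n-1 = a + b + 2*m + 2*q))"
proof -
  obtain x where x: "x \<in> set (Ml n)" "e \<in> set (snd (redm x))" using assms(1) unfolding Dl_def by auto
  obtain k0 a b j j' where xx: "x = (k0,a,b,j,j')" by (cases x) auto
  have p: "a \<le> 2*n" "b \<le> 2" "j \<le> n" "j' \<le> n"
    and q: "k0 \<noteq> 0 \<Longrightarrow> \<exists>q. 2*n-1 = ew a b (min j j') (max j j' - min j j') + 2*q"
    using Ml_props[OF x(1) assms(2)] xx by auto
  have e: "e \<in> set (snd (red k0 a b (min j j') (max j j' - min j j')))" using x(2) xx by (simp add: redm_def)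
  obtain k a' b' m where ee: "e = (k,a',b',m)" by (cases e) auto
  have bd: "a' \<le> 2*n+2 \<and> b' \<le> 2*n+2" using red_bounds[of k0 a b "min j j'" "max j j' - min j j'"] p e ee by fastforce
  have "k \<noteq> 0 \<Longrightarrow> \<exists>q. 2*n-1 = a' + b' + 2*m + 2*q"
  proof -
    assume k: "k \<noteq> 0"
    have "k0 \<noteq> 0"
    proof
      assume "k0 = 0"
      then show False using red_zero[of a b "min j j'" "max j j' - min j j'"] e ee k by auto
    qed
    then obtain q1 where q1: "2*n-1 = ew a b (min j j') (max j j' - min j j') + 2*q1" using q by blast
    obtain q2 where q2: "ew a b (min j j') (max j j' - min j j') = a' + b' + 2*m + 2*q2"
      using red_ew[of a b "min j j'" "max j j' - min j j'" k0] e ee unfolding EWP_def by fastforce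
    show ?thesis using q1 q2 by (intro exI[of _ "q1+q2"]) simp
  qed
  then show ?thesis using bd ee by auto
qed

lemma top_x:
  assumes "x \<in> set (Ml n)" "n \<ge> 2"
  shows "sum_list (map (tv s c (2*n-1) m) (snd (redm x))) = TLx n s c m x"
proof -
  obtain k0 a b j j' where xx: "x = (k0,a,b,j,j')" by (cases x) auto
  have q: "k0 \<noteq> 0 \<Longrightarrow> \<exists>q. 2*n-1 = ew a b (min j j') (max j j' - min j j') + 2*q"
    using Ml_props[OF assms] xx by auto
  show ?thesis
  proof (cases "k0 = 0")
    case True
    have "\<forall>e\<in>set (snd (red 0 a b (min j j') (max j j' - min j j'))). tv s c (2*n-1) m e = 0"
    proof
      fix e assume "e \<in> set (snd (red 0 a b (min j j') (max j j' - min j j')))"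
      then have "fst e = 0" using red_zero by blast
      then show "tv s c (2*n-1) m e = 0" by (cases e) auto
    qed
    then have "sum_list (map (tv s c (2*n-1) m) (snd (red 0 a b (min j j') (max j j' - min j j')))) = 0"
      by (rule slz)
    then show ?thesis using True xx by (simp add: redm_def TLx_def Lval0)
  next
    case False
    then obtain q where "2*n-1 = ew a b (min j j') (max j j' - min j j') + 2*q" using q by blast
    then have "ew a b (min j j') (max j j' - min j j') \<le> 2*n-1" by simp
    from red_top[OF this, of s c m k0] show ?thesis using xx by (simp add: redm_def TLx_def)
  qed
qed

lemma SD_split:
  assumes "\<forall>e\<in>set L. case e of (k,a,b,m) \<Rightarrow> k \<noteq> 0 \<longrightarrow> m < n"
  shows "SD s c u L = (\<Sum>m<n. sum_list (map (\<lambda>(k,a,b,m'). if m' = m then k * s^a * c^b else 0) L) * (u m)^2)"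
  using assms
proof (induction L)
  case Nil
  then show ?case by simp
next
  case (Cons e L)
  obtain k a b m0 where e: "e = (k,a,b,m0)" by (cases e) auto
  have h: "(\<Sum>m<n. (if m0 = m then k * s^a * c^b else 0) * (u m)^2) = dval s c u e"
  proof (cases "k = 0")
    case True
    have "(\<Sum>m<n. (if m0 = m then k * s^a * c^b else 0) * (u m)^2) = 0"
      by (rule sum.neutral) (simp add: True)
    then show ?thesis by (simp add: e True)
  next
    case False
    then have "m0 < n" using Cons.prems e by auto
    then show ?thesis by (simp add: e ifm)
  qed
  show ?case using Cons h by (simp add: e distrib_right sum.distrib)
qed

lemma split_m:
  "sum_list (map (\<lambda>(k,a,b,m'). if m' = m then k * s^a * c^b else 0) L)
   = sum_list (map (tv s c E m) L) + sum_list (map (\<lambda>(k,a',b',m'). if m' = m \<and> a' + b' + 2*m' \<noteq> E then k * s^a' * c^b' else 0) L)"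
  by (induction L) auto

lemma top_Dl:
  assumes "n \<ge> 2" "m < n"
  shows "sum_list (map (tv s c (2*n-1) m) (Dl n)) = of_nat (n^2) / 2 * of_nat ((n-1) choose m) * s^(2*n-2*m-2) * c"
proof -
  have "sum_list (map (tv s c (2*n-1) m) (Dl n)) = sum_list (map (\<lambda>x. sum_list (map (tv s c (2*n-1) m) (snd (redm x)))) (Ml n))"
    unfolding Dl_def by (simp only: sl_concat map_map o_def)
  also have "\<dots> = sum_list (map (TLx n s c m) (Ml n))"
    using top_x[OF _ assms(1)] by (intro arg_cong[where f=sum_list] map_cong) auto
  finally show ?thesis using TLsum[OF assms] by simp
qed

lemma rfun_nz:
  "rfun P L m a b \<noteq> 0 \<Longrightarrow> \<exists>k. k \<noteq> 0 \<and> (k,a,b,m) \<in> set L \<and> P a b m"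
proof (induction L)
  case Nil
  then show ?case by (simp add: rfun_def)
next
  case (Cons e L)
  obtain k a' b' m' where e: "e = (k,a',b',m')" by (cases e) auto
  show ?case
  proof (cases "rfun P L m a b = 0")
    case True
    then have "rfun P (e # L) m a b = (if a' = a \<and> b' = b \<and> m' = m \<and> P a' b' m' then k else 0)"
      by (auto simp: rfun_def e)
    then show ?thesis using Cons.prems e by (auto split: if_splits)
  next
    case False
    then show ?thesis using Cons.IH by auto
  qed
qed

lemma Rpoly_bound:
  assumes "\<forall>a b. r a b \<noteq> 0 \<longrightarrow> real (a + b) \<le> E" "bounded K"
  shows "\<exists>C. \<forall>lam::real. lam \<ge> 1 \<longrightarrow> (\<forall>p\<in>K. \<bar>Rpoly D r (ell lam x0 t0 \<beta>) p\<bar> \<le> C * lam powr E)"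
proof -
  obtain B where B: "\<forall>p\<in>K. norm p \<le> B" using assms(2) bounded_iff by blast
  define M where "M = \<bar>B\<bar> + \<bar>x0\<bar> + 1"
  have M1: "M \<ge> 1" unfolding M_def by simp
  define C where "C = (\<Sum>a\<le>D. \<Sum>b\<le>D. \<bar>r a b\<bar> * (2*M)^a * 2^b)"
  show ?thesis
  proof (intro exI[of _ C] allI impI ballI)
    fix lam :: real and p assume lam: "lam \<ge> 1" and p: "p \<in> K"
    obtain t x where tx: "p = (t,x)" by (cases p) auto
    have xM: "\<bar>x - x0\<bar> \<le> M"
    proof -
      have "norm x \<le> norm (t,x)" by (rule norm_snd_le)
      then have "\<bar>x\<bar> \<le> norm p" unfolding tx by simp
      then show ?thesis using B p unfolding M_def by auto
    qed
    have trm2: "\<bar>r a b * (2 * lam * (x - x0))^a * (2*lam)^b\<bar> \<le> \<bar>r a b\<bar> * (2*M)^a * 2^b * lam powr E" for a b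
    proof (cases "r a b = 0")
      case True then show ?thesis by simp
    next
      case False
      have ab: "real (a+b) \<le> E" using assms(1) False by auto
      have "\<bar>(2 * lam * (x - x0))^a\<bar> \<le> (2 * M)^a * lam^a"
      proof -
        have "\<bar>(2 * lam * (x - x0))\<bar> \<le> 2 * M * lam" using xM lam by (simp add: abs_mult mult_left_mono mult.commute)
        then have X: "\<bar>(2 * lam * (x - x0))\<bar>^a \<le> (2 * M * lam)^a" by (rule power_mono) simp
        have e1: "\<bar>(2*lam*(x-x0))^a\<bar> = \<bar>2*lam*(x-x0)\<bar>^a" by (rule power_abs)
        have e2: "(2*M*lam)^a = (2*M)^a * lam^a" by (rule power_mult_distrib)
        show ?thesis by (subst e1, subst e2[symmetric], rule X)
      qed
      moreover have "\<bar>(2*lam)^b\<bar> = 2^b * lam^b" using lam by (simp add: power_mult_distrib)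
      moreover have "lam^a * lam^b \<le> lam powr E"
      proof -
        have "lam^a * lam^b = lam^(a+b)" by (simp add: power_add)
        also have "\<dots> = lam powr (real (a+b))" using lam by (intro powr_realpow[symmetric]) simp
        also have "\<dots> \<le> lam powr E" using ab lam by (intro powr_mono) auto
        finally show ?thesis .
      qed
      ultimately have "\<bar>r a b\<bar> * \<bar>(2 * lam * (x - x0))^a\<bar> * \<bar>(2*lam)^b\<bar> \<le> \<bar>r a b\<bar> * ((2 * M)^a * lam^a) * (2^b * lam^b)"
        by (intro mult_mono) auto
      also have "\<dots> = \<bar>r a b\<bar> * (2*M)^a * 2^b * (lam^a * lam^b)" by (simp add: algebra_simps)
      also have "\<dots> \<le> \<bar>r a b\<bar> * (2*M)^a * 2^b * lam powr E"
        using \<open>lam^a * lam^b \<le> lam powr E\<close> M1 by (intro mult_left_mono) auto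
      finally show ?thesis by (simp add: abs_mult)
    qed
    have "\<bar>Rpoly D r (ell lam x0 t0 \<beta>) p\<bar> = \<bar>\<Sum>a\<le>D. \<Sum>b\<le>D. r a b * (2 * lam * (x - x0))^a * (2*lam)^b\<bar>"
      unfolding Rpoly_def tx ell_x ell_xx ..
    also have "\<dots> \<le> (\<Sum>a\<le>D. \<Sum>b\<le>D. \<bar>r a b * (2 * lam * (x - x0))^a * (2*lam)^b\<bar>)"
      by (rule order.trans[OF sum_abs]) (intro sum_mono sum_abs)
    also have "\<dots> \<le> (\<Sum>a\<le>D. \<Sum>b\<le>D. \<bar>r a b\<bar> * (2*M)^a * 2^b * lam powr E)"
      by (intro sum_mono trm2)
    also have "\<dots> = C * lam powr E" unfolding C_def by (simp add: sum_distrib_right)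
    finally show "\<bar>Rpoly D r (ell lam x0 t0 \<beta>) p\<bar> \<le> C * lam powr E" .
  qed
qed

theorem proposition3p1:
  fixes n :: nat and x0 t0 \<beta> :: real
  assumes "n \<ge> 2" and "\<beta> > 0"
  shows "\<exists>(D::nat) (g::nat \<Rightarrow> nat \<Rightarrow> nat \<Rightarrow> nat \<Rightarrow> real) (r::nat \<Rightarrow> nat \<Rightarrow> nat \<Rightarrow> real).
    (\<forall>lam::real. lam \<ge> 1 \<longrightarrow> (\<forall>w. smooth2 w \<longrightarrow> (\<forall>t x.
       let l = ell lam x0 t0 \<beta> in
       ((\<lambda>y. Gsum D g l w (t, y)) has_real_derivative
          (I1 n l w (t, x) * I2 n l w (t, x)
           - (\<Sum>m<n. (of_nat (n^2) / 2 * of_nat ((n - 1) choose m)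
                        * (partial_x l (t, x))^(2*n - 2*m - 2) * partial_x (partial_x l) (t, x)
                       + Rpoly D (r m) l (t, x)) * (dx m w (t, x))^2))) (at x))))
    \<and> (\<forall>m<n. \<forall>K::(real \<times> real) set. bounded K \<longrightarrow>
         (\<exists>C. \<forall>lam::real. lam \<ge> 1 \<longrightarrow> (\<forall>p\<in>K.
            \<bar>Rpoly D (r m) (ell lam x0 t0 \<beta>) p\<bar> \<le> C * lam powr (real (2*n) - 2 * real m - 3))))"
proof -
  have n: "n \<ge> 2" using assms(1) .
  define D where "D = 2*n+2"
  define g where "g = gfun (Gl n)"
  define r where "r = (\<lambda>m a b. rfun (\<lambda>a b m'. a + b + 2*m' \<noteq> 2*n-1) (Dl n) m a b)"
  have GB: "\<forall>(k,a',b',i',j')\<in>set (Gl n). a' \<le> D \<and> b' \<le> D \<and> i' \<le> D \<and> j' \<le> D"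
    using Gl_bounds[OF _ n] unfolding D_def by fastforce
  have DB: "\<forall>(k,a',b',m')\<in>set (Dl n). a' \<le> D \<and> b' \<le> D"
    using Dl_props[OF _ n] unfolding D_def by fastforce
  have DN: "\<forall>e\<in>set (Dl n). case e of (k,a,b,m) \<Rightarrow> k \<noteq> 0 \<longrightarrow> m < n"
  proof
    fix e assume e: "e \<in> set (Dl n)"
    obtain k a b m where ee: "e = (k,a,b,m)" by (cases e) auto
    have "m < n" if kk: "k \<noteq> 0"
    proof -
      have P: "k \<noteq> 0 \<longrightarrow> (\<exists>q. 2*n-1 = a+b+2*m+2*q)" using Dl_props[OF e n] ee by simp
      obtain q where "2*n-1 = a+b+2*m+2*q" using P kk by blast
      then show "m < n" using n by arith
    qed
    then show "case e of (k,a,b,m) \<Rightarrow> k \<noteq> 0 \<longrightarrow> m < n" using ee by auto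
  qed
  have part1: "\<forall>lam::real. lam \<ge> 1 \<longrightarrow> (\<forall>w. smooth2 w \<longrightarrow> (\<forall>t x.
       let l = ell lam x0 t0 \<beta> in
       ((\<lambda>y. Gsum D g l w (t, y)) has_real_derivative
          (I1 n l w (t, x) * I2 n l w (t, x)
           - (\<Sum>m<n. (of_nat (n^2) / 2 * of_nat ((n - 1) choose m)
                        * (partial_x l (t, x))^(2*n - 2*m - 2) * partial_x (partial_x l) (t, x)
                       + Rpoly D (r m) l (t, x)) * (dx m w (t, x))^2))) (at x)))"
  proof (intro allI impI)
    fix lam :: real and w t x
    assume lam: "lam \<ge> 1" and w: "smooth2 w"
    define l where "l = ell lam x0 t0 \<beta>"
    define S where "S y = partial_x l (t,y)" for y
    define U where "U y i = dx i w (t,y)" for y i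
    define cx where "cx = partial_x (partial_x l) (t,x)"
    have cc: "partial_x (partial_x l) (t,y) = 2*lam" for y unfolding l_def by (rule ell_xx)
    have Sfun: "S = (\<lambda>y. 2 * lam * (y - x0))" unfolding S_def l_def by (rule ext) (rule ell_x)
    have SD: "(S has_real_derivative 2*lam) (at x)" unfolding Sfun by (auto intro!: derivative_eq_intros)
    have UD: "((\<lambda>y. U y i) has_real_derivative U x (Suc i)) (at x)" for i
      unfolding U_def by (rule dx_deriv[OF w])
    have Gs: "Gsum D g l w (t,y) = sum_list (map (gmono (S y) (2*lam) (U y)) (Gl n))" for y
      using gfun_conv[OF GB, of "S y" "2*lam" "U y"] unfolding Gsum_def g_def cc S_def U_def by simp
    have deriv1: "((\<lambda>y. Gsum D g l w (t,y)) has_real_derivative SG (S x) (2*lam) (U x) (Gl n)) (at x)"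
      unfolding Gs by (rule mono_deriv[where U=U, OF SD UD])
    have I: "I1 n l w (t,x) * I2 n l w (t,x) = SG (S x) (2*lam) (U x) (Gl n) + SD (S x) (2*lam) (U x) (Dl n)"
    proof -
      have "I1 n l w (t,x) * I2 n l w (t,x) = sum_list (map (gmono (S x) (2*lam) (U x)) (Ml n))"
        using I12_Ml[OF n, of l w "(t,x)"] unfolding cc S_def U_def by simp
      then show ?thesis unfolding red_list Gl_def Dl_def .
    qed
    have Dsum: "SD (S x) (2*lam) (U x) (Dl n) = (\<Sum>m<n. (of_nat (n^2) / 2 * of_nat ((n - 1) choose m)
                        * (partial_x l (t, x))^(2*n - 2*m - 2) * partial_x (partial_x l) (t, x)
                       + Rpoly D (r m) l (t, x)) * (dx m w (t, x))^2)"
    proof -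
      have cx: "2*lam = cx" unfolding cx_def cc ..
      have "SD (S x) (2*lam) (U x) (Dl n) = (\<Sum>m<n. sum_list (map (\<lambda>(k,a,b,m'). if m' = m then k * (S x)^a * cx^b else 0) (Dl n)) * (U x m)^2)"
        unfolding cx by (rule SD_split[OF DN])
      also have "\<dots> = (\<Sum>m<n. (of_nat (n^2) / 2 * of_nat ((n - 1) choose m)
                        * (partial_x l (t, x))^(2*n - 2*m - 2) * partial_x (partial_x l) (t, x)
                       + Rpoly D (r m) l (t, x)) * (dx m w (t, x))^2)"
      proof (intro sum.cong refl)
        fix m assume m: "m \<in> {..<n}"
        have "sum_list (map (\<lambda>(k,a,b,m'). if m' = m then k * (S x)^a * cx^b else 0) (Dl n))
          = sum_list (map (tv (S x) cx (2*n-1) m) (Dl n))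
           + sum_list (map (\<lambda>(k,a',b',m'). if m' = m \<and> a' + b' + 2*m' \<noteq> 2*n-1 then k * (S x)^a' * cx^b' else 0) (Dl n))"
          by (rule split_m)
        also have "sum_list (map (tv (S x) cx (2*n-1) m) (Dl n)) = of_nat (n^2) / 2 * of_nat ((n-1) choose m) * (S x)^(2*n-2*m-2) * cx"
          using top_Dl[OF n] m by simp
        also have "sum_list (map (\<lambda>(k,a',b',m'). if m' = m \<and> a' + b' + 2*m' \<noteq> 2*n-1 then k * (S x)^a' * cx^b' else 0) (Dl n))
            = Rpoly D (r m) l (t,x)"
          using rfun_conv[OF DB, of m "\<lambda>a b m'. a + b + 2*m' \<noteq> 2*n-1" "S x" cx]
          unfolding Rpoly_def r_def S_def cx_def by simp
        finally show "sum_list (map (\<lambda>(k,a,b,m'). if m' = m then k * (S x)^a * cx^b else 0) (Dl n)) * (U x m)^2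
           = (of_nat (n^2) / 2 * of_nat ((n - 1) choose m)
                        * (partial_x l (t, x))^(2*n - 2*m - 2) * partial_x (partial_x l) (t, x)
                       + Rpoly D (r m) l (t, x)) * (dx m w (t, x))^2"
          unfolding S_def U_def cx_def by simp
      qed
      finally show ?thesis .
    qed
    have "SG (S x) (2*lam) (U x) (Gl n) = I1 n l w (t, x) * I2 n l w (t, x)
           - (\<Sum>m<n. (of_nat (n^2) / 2 * of_nat ((n - 1) choose m)
                        * (partial_x l (t, x))^(2*n - 2*m - 2) * partial_x (partial_x l) (t, x)
                       + Rpoly D (r m) l (t, x)) * (dx m w (t, x))^2)"
      using I Dsum by simp
    then show "let l = ell lam x0 t0 \<beta> in
       ((\<lambda>y. Gsum D g l w (t, y)) has_real_derivative
          (I1 n l w (t, x) * I2 n l w (t, x)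
           - (\<Sum>m<n. (of_nat (n^2) / 2 * of_nat ((n - 1) choose m)
                        * (partial_x l (t, x))^(2*n - 2*m - 2) * partial_x (partial_x l) (t, x)
                       + Rpoly D (r m) l (t, x)) * (dx m w (t, x))^2))) (at x)"
      using deriv1 unfolding Let_def l_def by simp
  qed
  have part2: "\<forall>m<n. \<forall>K::(real \<times> real) set. bounded K \<longrightarrow>
         (\<exists>C. \<forall>lam::real. lam \<ge> 1 \<longrightarrow> (\<forall>p\<in>K.
            \<bar>Rpoly D (r m) (ell lam x0 t0 \<beta>) p\<bar> \<le> C * lam powr (real (2*n) - 2 * real m - 3)))"
  proof (intro allI impI)
    fix m and K :: "(real \<times> real) set"
    assume m: "m < n" and K: "bounded K"
    have "\<forall>a b. r m a b \<noteq> 0 \<longrightarrow> real (a + b) \<le> real (2*n) - 2 * real m - 3"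
    proof (intro allI impI)
      fix a b assume "r m a b \<noteq> 0"
      then obtain k where k: "k \<noteq> 0" "(k,a,b,m) \<in> set (Dl n)" "a + b + 2*m \<noteq> 2*n-1"
        using rfun_nz unfolding r_def by blast
      obtain q where q: "2*n-1 = a + b + 2*m + 2*q" using Dl_props[OF k(2) n] k(1) by auto
      have "q \<noteq> 0" using q k(3) by auto
      then have "a + b + 2*m + 3 \<le> 2*n" using q n by linarith
      then have "real (a + b + 2*m + 3) \<le> real (2*n)" by (simp only: of_nat_le_iff)
      then show "real (a + b) \<le> real (2*n) - 2 * real m - 3" by simp
    qed
    then show "\<exists>C. \<forall>lam::real. lam \<ge> 1 \<longrightarrow> (\<forall>p\<in>K.
            \<bar>Rpoly D (r m) (ell lam x0 t0 \<beta>) p\<bar> \<le> C * lam powr (real (2*n) - 2 * real m - 3))"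
      using Rpoly_bound K by blast
  qed
  show ?thesis using part1 part2 by blast
qed


end
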